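(* Let $L_n$ and $PL_n$ be as in the context. Then $PL_n$ is a non-abelian free group of finite rank if and only if $n\ge 4$ (for $n=2,3$, $PL_n$ is trivial).
   Context: For $n\ge 2$, $L_n=\langle y_1,\dots,y_{n-1}\mid y_j^2=1\ (1\le j\le n-1),\ y_iy_{i+1}y_i=y_{i+1}y_iy_{i+1}\ (1\le i\le n-2)\rangle$ (no relations between $y_i,y_j$ with $|i-j|\ge 2$). Let $\pi:L_n\to S_n$ be the surjective homomorphism with $\pi(y_i)=(i\ i{+}1)$, the transposition, and $PL_n=\ker\pi$. *)

theory Defs
  imports "HOL-Algebra.Algebra" "HOL-Combinatorics.Transposition"
begin

text \<open>Words in the generators y_1, ..., y_(n-1) of L_n: lists of indices in {1..<n}.
  Since every generator is an involution, no inverse letters are needed.\<close>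

definition Lwords :: "nat \<Rightarrow> nat list set" where
  "Lwords n = {w. set w \<subseteq> {1..<n}}"

inductive_set Lrel :: "nat \<Rightarrow> (nat list \<times> nat list) set" for n :: nat where
  Lrefl: "w \<in> Lwords n \<Longrightarrow> (w, w) \<in> Lrel n"
| Lsym: "(u, v) \<in> Lrel n \<Longrightarrow> (v, u) \<in> Lrel n"
| Ltrans: "(u, v) \<in> Lrel n \<Longrightarrow> (v, w) \<in> Lrel n \<Longrightarrow> (u, w) \<in> Lrel n"
| Lsq: "u \<in> Lwords n \<Longrightarrow> v \<in> Lwords n \<Longrightarrow> 1 \<le> j \<Longrightarrow> j < n
        \<Longrightarrow> (u @ [j, j] @ v, u @ v) \<in> Lrel n"
| Lbraid: "u \<in> Lwords n \<Longrightarrow> v \<in> Lwords n \<Longrightarrow> 1 \<le> i \<Longrightarrow> i + 2 \<le> n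
        \<Longrightarrow> (u @ [i, Suc i, i] @ v, u @ [Suc i, i, Suc i] @ v) \<in> Lrel n"

definition L :: "nat \<Rightarrow> nat list set monoid" where
  "L n = \<lparr> carrier = Lwords n // Lrel n,
           monoid.mult = (\<lambda>A B. \<Union>a\<in>A. \<Union>b\<in>B. Lrel n `` {a @ b}),
           monoid.one = Lrel n `` {[]} \<rparr>"

definition perm_of_word :: "nat list \<Rightarrow> nat \<Rightarrow> nat" where
  "perm_of_word w = foldr (\<lambda>i p. transpose i (Suc i) \<circ> p) w id"

definition PL_set :: "nat \<Rightarrow> nat list set set" where
  "PL_set n = {A \<in> carrier (L n). \<forall>w\<in>A. perm_of_word w = id}"

definition PL :: "nat \<Rightarrow> nat list set monoid" where
  "PL n = (L n)\<lparr> carrier := PL_set n \<rparr>"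

text \<open>A letter is (x, b) with b = True
  meaning the inverse of x.\<close>

fun freely_reduced :: "('a \<times> bool) list \<Rightarrow> bool" where
  "freely_reduced ((x, b) # (y, c) # ws) = ((\<not> (x = y \<and> b \<noteq> c)) \<and> freely_reduced ((y, c) # ws))"
| "freely_reduced _ = True"

definition eval_word :: "('a, 'b) monoid_scheme \<Rightarrow> ('a \<times> bool) list \<Rightarrow> 'a" where
  "eval_word G ws = foldr (\<lambda>xb r. monoid.mult G (if snd xb then m_inv G (fst xb) else fst xb) r) ws (monoid.one G)"

definition free_basis :: "('a, 'b) monoid_scheme \<Rightarrow> 'a set \<Rightarrow> bool" where
  "free_basis G S \<longleftrightarrow> S \<subseteq> carrier G \<and> generate G S = carrier G \<and>
     (\<forall>ws. ws \<noteq> [] \<and> fst ` set ws \<subseteq> S \<and> freely_reduced ws \<longrightarrow> eval_word G ws \<noteq> (monoid.one G))"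

definition free_group_finite_rank :: "('a, 'b) monoid_scheme \<Rightarrow> bool" where
  "free_group_finite_rank G \<longleftrightarrow> group G \<and> (\<exists>S. finite S \<and> free_basis G S)"

definition nonabelian :: "('a, 'b) monoid_scheme \<Rightarrow> bool" where
  "nonabelian G \<longleftrightarrow> (\<exists>x\<in>carrier G. \<exists>y\<in>carrier G. monoid.mult G x y \<noteq> monoid.mult G y x)"

end

theory Submission
  imports Defs "HOL-Combinatorics.Permutations"
begin


lemma Lwords_append[simp]: "u @ v \<in> Lwords n \<longleftrightarrow> u \<in> Lwords n \<and> v \<in> Lwords n"
  by (auto simp: Lwords_def)
lemma Lwords_Cons[simp]: "j # v \<in> Lwords n \<longleftrightarrow> 1 \<le> j \<and> j < n \<and> v \<in> Lwords n"
  by (auto simp: Lwords_def)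
lemma Lwords_Nil[simp]: "[] \<in> Lwords n" by (auto simp: Lwords_def)
lemma Lwords_rev[simp]: "rev v \<in> Lwords n \<longleftrightarrow> v \<in> Lwords n"
  by (auto simp: Lwords_def)

lemma Lrel_words: "(u,v) \<in> Lrel n \<Longrightarrow> u \<in> Lwords n \<and> v \<in> Lwords n"
  by (induction rule: Lrel.induct) auto

lemma Lrel_cong: "(u,v) \<in> Lrel n \<Longrightarrow> x \<in> Lwords n \<Longrightarrow> y \<in> Lwords n \<Longrightarrow> (x@u@y, x@v@y) \<in> Lrel n"
proof (induction rule: Lrel.induct)
  case (Lrefl w) then show ?case by (intro Lrel.Lrefl) auto
next
  case (Lsym u v) then show ?case by (blast intro: Lrel.Lsym)
next
  case (Ltrans u v w) then show ?case by (blast intro: Lrel.Ltrans)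
next
  case (Lsq u v j)
  have "((x@u)@[j,j]@(v@y), (x@u)@(v@y)) \<in> Lrel n" using Lsq by (intro Lrel.Lsq) auto
  then show ?case by simp
next
  case (Lbraid u v i)
  have "((x@u)@[i, Suc i, i]@(v@y), (x@u)@[Suc i, i, Suc i]@(v@y)) \<in> Lrel n" using Lbraid by (intro Lrel.Lbraid) auto
  then show ?case by simp
qed

lemma Lrel_cong2: "(u,v) \<in> Lrel n \<Longrightarrow> (u',v') \<in> Lrel n \<Longrightarrow> (u@u', v@v') \<in> Lrel n"
proof -
  assume a: "(u,v) \<in> Lrel n" "(u',v') \<in> Lrel n"
  have "(u@u', v@u') \<in> Lrel n" using Lrel_cong[OF a(1), of "[]" u'] Lrel_words[OF a(2)] by simp
  moreover have "(v@u', v@v') \<in> Lrel n" using Lrel_cong[OF a(2), of v "[]"] Lrel_words[OF a(1)] by simp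
  ultimately show ?thesis by (blast intro: Lrel.Ltrans)
qed

lemma Lrel_equiv: "equiv (Lwords n) (Lrel n)"
  unfolding equiv_def refl_on_def sym_def trans_def
  using Lrel_words by (auto intro: Lrel.Lrefl Lrel.Lsym Lrel.Ltrans)

lemma Lrel_sq: "j \<ge> 1 \<Longrightarrow> j < n \<Longrightarrow> ([j,j], []) \<in> Lrel n"
  using Lrel.Lsq[of "[]" n "[]" j] by simp

lemma Lrel_rev_cancel: "w \<in> Lwords n \<Longrightarrow> (rev w @ w, []) \<in> Lrel n \<and> (w @ rev w, []) \<in> Lrel n"
proof (induction w)
  case Nil then show ?case by (auto intro: Lrel.Lrefl)
next
  case (Cons j w)
  then have IH: "(rev w @ w, []) \<in> Lrel n" "(w @ rev w, []) \<in> Lrel n" and j: "1 \<le> j" "j < n" and w: "w \<in> Lwords n" by auto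
  have "(rev w @ [j,j] @ w, rev w @ w) \<in> Lrel n" using j w by (intro Lrel.Lsq) auto
  then have 1: "(rev (j#w) @ (j#w), []) \<in> Lrel n" using IH(1) by (auto intro: Lrel.Ltrans)
  have "([j] @ (w @ rev w) @ [j], [j] @ [] @ [j]) \<in> Lrel n" using j by (intro Lrel_cong IH(2)) auto
  moreover have "([j,j], []) \<in> Lrel n" using j by (rule Lrel_sq)
  ultimately have 2: "((j#w) @ rev (j#w), []) \<in> Lrel n" by (auto intro: Lrel.Ltrans)
  show ?case using 1 2 by simp
qed

lemma perm_of_word_append: "perm_of_word (u @ v) = perm_of_word u \<circ> perm_of_word v"
  by (induction u) (auto simp: perm_of_word_def)
lemma perm_of_word_Nil[simp]: "perm_of_word [] = id" by (simp add: perm_of_word_def)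
lemma perm_of_word_Cons: "perm_of_word (j # w) = transpose j (Suc j) \<circ> perm_of_word w"
  by (simp add: perm_of_word_def)

lemma braid_perm: "transpose i (Suc i) \<circ> (transpose (Suc i) (Suc (Suc i)) \<circ> transpose i (Suc i)) =
  transpose (Suc i) (Suc (Suc i)) \<circ> (transpose i (Suc i) \<circ> transpose (Suc i) (Suc (Suc i)))"
  by (auto simp: fun_eq_iff transpose_def)

lemma braid_perm_pt: "transpose i (Suc i) (transpose (Suc i) (Suc (Suc i)) (transpose i (Suc i) x)) =
  transpose (Suc i) (Suc (Suc i)) (transpose i (Suc i) (transpose (Suc i) (Suc (Suc i)) x))"
  by (auto simp: transpose_def)

lemma Lrel_perm: "(u,v) \<in> Lrel n \<Longrightarrow> perm_of_word u = perm_of_word v"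
  by (induction rule: Lrel.induct) (auto simp: perm_of_word_append perm_of_word_Cons braid_perm_pt fun_eq_iff)

lemma perm_rev: "perm_of_word w \<circ> perm_of_word (rev w) = id \<and> perm_of_word (rev w) \<circ> perm_of_word w = id"
  by (induction w) (auto simp: perm_of_word_append perm_of_word_Cons fun_eq_iff)

lemma bij_perm: "bij (perm_of_word w)"
  using perm_rev[of w] o_bij[of "perm_of_word (rev w)" "perm_of_word w"] by blast

abbreviation cl :: "nat \<Rightarrow> nat list \<Rightarrow> nat list set" where "cl n w \<equiv> Lrel n `` {w}"

lemma cl_eq_iff: "u \<in> Lwords n \<Longrightarrow> v \<in> Lwords n \<Longrightarrow> cl n u = cl n v \<longleftrightarrow> (u,v) \<in> Lrel n"
  by (rule eq_equiv_class_iff[OF Lrel_equiv])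

lemma cl_self: "u \<in> Lwords n \<Longrightarrow> u \<in> cl n u"
  by (rule equiv_class_self[OF Lrel_equiv])

lemma L_mult: "u \<in> Lwords n \<Longrightarrow> v \<in> Lwords n \<Longrightarrow> cl n u \<otimes>\<^bsub>L n\<^esub> cl n v = cl n (u @ v)"
proof -
  assume uv: "u \<in> Lwords n" "v \<in> Lwords n"
  have "\<And>a b. a \<in> cl n u \<Longrightarrow> b \<in> cl n v \<Longrightarrow> cl n (a@b) = cl n (u@v)"
  proof -
    fix a b assume "a \<in> cl n u" "b \<in> cl n v"
    then have "(u,a) \<in> Lrel n" "(v,b) \<in> Lrel n" by auto
    then have "(a@b,u@v) \<in> Lrel n" by (blast intro: Lrel_cong2 Lrel.Lsym)
    then show "cl n (a@b) = cl n (u@v)" using Lrel_words by (metis cl_eq_iff)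
  qed
  then have "(\<Union>a\<in>cl n u. \<Union>b\<in>cl n v. cl n (a@b)) = (\<Union>a\<in>cl n u. \<Union>b\<in>cl n v. cl n (u@v))"
    by (intro SUP_cong refl) simp
  also have "\<dots> = cl n (u@v)" using uv cl_self[of u n] cl_self[of v n] by (simp only: UN_constant) auto
  finally show ?thesis unfolding L_def by simp
qed

lemma L_one: "\<one>\<^bsub>L n\<^esub> = cl n []" by (simp add: L_def)
lemma L_carrier: "carrier (L n) = Lwords n // Lrel n" by (simp add: L_def)

lemma L_carrierE: "A \<in> carrier (L n) \<Longrightarrow> (\<And>a. A = cl n a \<Longrightarrow> a \<in> Lwords n \<Longrightarrow> P) \<Longrightarrow> P"
  unfolding L_carrier by (erule quotientE)

lemma cl_in_L: "a \<in> Lwords n \<Longrightarrow> cl n a \<in> carrier (L n)"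
  unfolding L_carrier by (rule quotientI)

lemma group_L: "group (L n)"
proof (rule groupI)
  fix x y assume "x \<in> carrier (L n)" "y \<in> carrier (L n)"
  then show "x \<otimes>\<^bsub>L n\<^esub> y \<in> carrier (L n)"
    by (elim L_carrierE) (simp add: L_mult cl_in_L)
next
  show "\<one>\<^bsub>L n\<^esub> \<in> carrier (L n)" by (simp add: L_one cl_in_L)
next
  fix x y z assume "x \<in> carrier (L n)" "y \<in> carrier (L n)" "z \<in> carrier (L n)"
  then show "x \<otimes>\<^bsub>L n\<^esub> y \<otimes>\<^bsub>L n\<^esub> z = x \<otimes>\<^bsub>L n\<^esub> (y \<otimes>\<^bsub>L n\<^esub> z)"
    by (elim L_carrierE) (simp add: L_mult)
next
  fix x assume "x \<in> carrier (L n)"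
  then show "\<one>\<^bsub>L n\<^esub> \<otimes>\<^bsub>L n\<^esub> x = x"
    by (elim L_carrierE) (simp add: L_mult L_one)
next
  fix x assume "x \<in> carrier (L n)"
  then show "\<exists>y\<in>carrier (L n). y \<otimes>\<^bsub>L n\<^esub> x = \<one>\<^bsub>L n\<^esub>"
  proof (elim L_carrierE)
    fix a assume a: "x = cl n a" "a \<in> Lwords n"
    have "cl n (rev a) \<otimes>\<^bsub>L n\<^esub> x = cl n []"
      using a Lrel_rev_cancel[of a n] by (simp add: L_mult cl_eq_iff)
    then show ?thesis using a by (auto simp: L_one intro!: bexI[of _ "cl n (rev a)"] cl_in_L)
  qed
qed

lemma L_inv: "a \<in> Lwords n \<Longrightarrow> inv\<^bsub>L n\<^esub> (cl n a) = cl n (rev a)"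
  using Lrel_rev_cancel[of a n]
  by (intro group.inv_equality[OF group_L]) (auto simp: L_mult cl_eq_iff L_one cl_in_L)

lemma PL_set_cl: "a \<in> Lwords n \<Longrightarrow> cl n a \<in> PL_set n \<longleftrightarrow> perm_of_word a = id"
proof
  assume "a \<in> Lwords n" "cl n a \<in> PL_set n" then show "perm_of_word a = id"
    using cl_self[of a n] unfolding PL_set_def by blast
next
  assume a: "a \<in> Lwords n" "perm_of_word a = id"
  have "\<forall>w\<in>cl n a. perm_of_word w = id" using a Lrel_perm[of a _ n] by simp
  then show "cl n a \<in> PL_set n" unfolding PL_set_def using cl_in_L[OF a(1)] by blast
qed

lemma PL_setE: "A \<in> PL_set n \<Longrightarrow> (\<And>a. A = cl n a \<Longrightarrow> a \<in> Lwords n \<Longrightarrow> perm_of_word a = id \<Longrightarrow> P) \<Longrightarrow> P"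
proof -
  assume A: "A \<in> PL_set n" and P: "\<And>a. A = cl n a \<Longrightarrow> a \<in> Lwords n \<Longrightarrow> perm_of_word a = id \<Longrightarrow> P"
  from A have "A \<in> carrier (L n)" by (simp add: PL_set_def)
  then obtain a where a: "A = cl n a" "a \<in> Lwords n" by (elim L_carrierE)
  with A have "perm_of_word a = id" using cl_self[of a n] by (auto simp: PL_set_def)
  with a P show P by blast
qed

lemma subgroup_PL: "subgroup (PL_set n) (L n)"
proof (rule group.subgroupI[OF group_L])
  show "PL_set n \<subseteq> carrier (L n)" by (auto simp: PL_set_def)
  show "PL_set n \<noteq> {}" using PL_set_cl[of "[]" n] by auto
  fix a assume "a \<in> PL_set n" then show "inv\<^bsub>L n\<^esub> a \<in> PL_set n"
    by (elim PL_setE) (metis L_inv Lwords_rev PL_set_cl comp_id perm_rev)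
next
  fix a b assume "a \<in> PL_set n" "b \<in> PL_set n" then show "a \<otimes>\<^bsub>L n\<^esub> b \<in> PL_set n"
    by (elim PL_setE) (simp add: L_mult PL_set_cl perm_of_word_append)
qed

lemma group_PL: "group (PL n)"
  unfolding PL_def using subgroup.subgroup_is_group[OF subgroup_PL group_L] .




abbreviation tr :: "nat \<Rightarrow> nat \<Rightarrow> nat" where "tr j \<equiv> transpose j (Suc j)"

type_synonym ltr = "(nat \<Rightarrow> nat) \<times> nat"
type_synonym fword = "(ltr \<times> bool) list"

definition inv_word :: "('a \<times> bool) list \<Rightarrow> ('a \<times> bool) list" where
  "inv_word w = rev (map (\<lambda>(x,b). (x, \<not> b)) w)"

lemma inv_word_inv_word[simp]: "inv_word (inv_word w) = w"
  by (induction w) (auto simp: inv_word_def)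
lemma inv_word_append[simp]: "inv_word (u @ v) = inv_word v @ inv_word u"
  by (simp add: inv_word_def)
lemma inv_word_Nil[simp]: "inv_word [] = []" by (simp add: inv_word_def)
lemma inv_word_Cons: "inv_word ((x,b) # w) = inv_word w @ [(x, \<not>b)]" by (simp add: inv_word_def)

definition elim :: "nat \<Rightarrow> (nat \<Rightarrow> nat) \<Rightarrow> nat \<Rightarrow> bool" where
  "elim n \<sigma> j \<longleftrightarrow> Suc (Suc j) \<le> n \<and> \<sigma> (Suc (Suc j)) < \<sigma> j \<and> \<sigma> (Suc (Suc j)) < \<sigma> (Suc j)"

definition Dset :: "nat \<Rightarrow> (nat \<Rightarrow> nat) \<Rightarrow> nat set" where
  "Dset n \<sigma> = {d. 1 \<le> d \<and> d < n \<and> \<sigma> (Suc d) < \<sigma> d}"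

definition tree :: "nat \<Rightarrow> (nat \<Rightarrow> nat) \<Rightarrow> nat \<Rightarrow> bool" where
  "tree n \<rho> j \<longleftrightarrow> Dset n (\<rho> \<circ> tr j) \<noteq> {} \<and> Max (Dset n (\<rho> \<circ> tr j)) = j"

definition base0 :: "nat \<Rightarrow> (nat \<Rightarrow> nat) \<Rightarrow> nat \<Rightarrow> fword" where
  "base0 n \<rho> j = (if tree n \<rho> j then [] else [((\<rho>, j), False)])"

definition dirw :: "((nat \<Rightarrow> nat) \<Rightarrow> nat \<Rightarrow> ('a \<times> bool) list) \<Rightarrow> (nat \<Rightarrow> nat) \<Rightarrow> nat \<Rightarrow> ('a \<times> bool) list" where
  "dirw f \<sigma> j = (if \<sigma> j < \<sigma> (Suc j) then f \<sigma> j else inv_word (f (\<sigma> \<circ> tr j) j))"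

lemma comp_tr_tr[simp]: "\<sigma> \<circ> tr j \<circ> tr j = \<sigma>"
  by (simp add: o_assoc[symmetric])

lemma dirw_swap: "\<sigma> j \<noteq> \<sigma> (Suc j) \<Longrightarrow> dirw f (\<sigma> \<circ> tr j) j = inv_word (dirw f \<sigma> j)"
  by (auto simp: dirw_def)

primrec Ff :: "nat \<Rightarrow> nat \<Rightarrow> (nat \<Rightarrow> nat) \<Rightarrow> nat \<Rightarrow> fword" where
  "Ff 0 n \<rho> j = base0 n \<rho> j"
| "Ff (Suc k) n \<rho> j = (if elim n \<rho> j then
     dirw (Ff k n) \<rho> (Suc j) @ dirw (base0 n) (\<rho> \<circ> tr (Suc j)) j @
     dirw (Ff k n) (\<rho> \<circ> tr (Suc j) \<circ> tr j) (Suc j) @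
     dirw (base0 n) (\<rho> \<circ> tr (Suc j) \<circ> tr j \<circ> tr (Suc j)) j @
     dirw (Ff k n) (\<rho> \<circ> tr (Suc j) \<circ> tr j \<circ> tr (Suc j) \<circ> tr j) (Suc j)
   else base0 n \<rho> j)"

lemma Ff_fuel: "n - j \<le> k \<Longrightarrow> n - j \<le> k' \<Longrightarrow> Ff k n \<rho> j = Ff k' n \<rho> j"
proof (induction k arbitrary: k' \<rho> j)
  case 0
  then have "\<not> elim n \<rho> j" by (auto simp: elim_def)
  then show ?case by (cases k') auto
next
  case (Suc k)
  show ?case
  proof (cases k')
    case 0
    with Suc.prems have "\<not> elim n \<rho> j" by (auto simp: elim_def)
    then show ?thesis using 0 by simp
  next
    case (Suc k'')
    show ?thesis
    proof (cases "elim n \<rho> j")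
      case True
      then have le: "n - Suc j \<le> k" "n - Suc j \<le> k''" using Suc.prems \<open>k' = Suc k''\<close> by (auto simp: elim_def)
      have e: "\<And>\<sigma>. dirw (Ff k n) \<sigma> (Suc j) = dirw (Ff k'' n) \<sigma> (Suc j)"
        unfolding dirw_def by (simp only: Suc.IH[OF le])
      show ?thesis using True \<open>k' = Suc k''\<close> by (simp only: Ff.simps e)
    next
      case False then show ?thesis using \<open>k' = Suc k''\<close> by simp
    qed
  qed
qed

definition F :: "nat \<Rightarrow> (nat \<Rightarrow> nat) \<Rightarrow> nat \<Rightarrow> fword" where "F n \<rho> j = Ff n n \<rho> j"
definition tau :: "nat \<Rightarrow> (nat \<Rightarrow> nat) \<Rightarrow> nat \<Rightarrow> fword" where "tau n \<sigma> j = dirw (F n) \<sigma> j"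
definition bd :: "nat \<Rightarrow> (nat \<Rightarrow> nat) \<Rightarrow> nat \<Rightarrow> fword" where "bd n \<sigma> j = dirw (base0 n) \<sigma> j"

lemma F_base: "\<not> elim n \<rho> j \<Longrightarrow> F n \<rho> j = base0 n \<rho> j"
  unfolding F_def by (cases n) auto

lemma F_elim: "elim n \<rho> j \<Longrightarrow> F n \<rho> j =
     tau n \<rho> (Suc j) @ bd n (\<rho> \<circ> tr (Suc j)) j @
     tau n (\<rho> \<circ> tr (Suc j) \<circ> tr j) (Suc j) @
     bd n (\<rho> \<circ> tr (Suc j) \<circ> tr j \<circ> tr (Suc j)) j @
     tau n (\<rho> \<circ> tr (Suc j) \<circ> tr j \<circ> tr (Suc j) \<circ> tr j) (Suc j)"
proof -
  assume e: "elim n \<rho> j"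
  then obtain k where n: "n = Suc k" and le: "n - Suc j \<le> k" by (cases n) (auto simp: elim_def)
  have fu: "\<And>\<sigma>. Ff k n \<sigma> (Suc j) = F n \<sigma> (Suc j)" unfolding F_def using le by (intro Ff_fuel) auto
  have "F n \<rho> j = Ff (Suc k) n \<rho> j" unfolding F_def by (rule Ff_fuel) (use n in auto)
  also note Ff.simps(2)[of k n \<rho> j]
  finally show ?thesis using e by (simp add: tau_def bd_def dirw_def fu)
qed

lemma elim_swap: "elim n (\<sigma> \<circ> tr j) j = elim n \<sigma> j"
  by (auto simp: elim_def)

lemma tau_noelim: "\<not> elim n \<sigma> j \<Longrightarrow> tau n \<sigma> j = bd n \<sigma> j"
  by (auto simp: tau_def bd_def dirw_def F_base elim_swap)

lemma tau_swap: "\<sigma> j \<noteq> \<sigma> (Suc j) \<Longrightarrow> tau n (\<sigma> \<circ> tr j) j = inv_word (tau n \<sigma> j)"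
  unfolding tau_def by (rule dirw_swap)

fun H :: "nat \<Rightarrow> (nat \<Rightarrow> nat) \<Rightarrow> nat list \<Rightarrow> fword" where
  "H n \<sigma> [] = []"
| "H n \<sigma> (j # w) = tau n \<sigma> j @ H n (\<sigma> \<circ> tr j) w"

lemma H_append: "H n \<sigma> (u @ v) = H n \<sigma> u @ H n (\<sigma> \<circ> perm_of_word u) v"
  by (induction u arbitrary: \<sigma>) (auto simp: perm_of_word_Cons o_assoc)

lemma inj_comp_perm: "inj \<sigma> \<Longrightarrow> inj (\<sigma> \<circ> perm_of_word w)"
  using bij_perm[of w] by (simp add: bij_is_inj inj_compose)

lemma H_rev: "inj \<sigma> \<Longrightarrow> H n (\<sigma> \<circ> perm_of_word w) (rev w) = inv_word (H n \<sigma> w)"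
proof (induction w arbitrary: \<sigma>)
  case Nil then show ?case by simp
next
  case (Cons j w)
  have inj1: "inj (\<sigma> \<circ> tr j)" using Cons.prems by (simp add: inj_compose)
  have pe: "\<sigma> \<circ> perm_of_word (j # w) \<circ> perm_of_word (rev w) = \<sigma> \<circ> tr j"
    using perm_rev[of w] by (simp add: perm_of_word_Cons o_assoc[symmetric])
  have ne: "\<sigma> j \<noteq> \<sigma> (Suc j)" by (metis Cons.prems injD n_not_Suc_n)
  have "H n (\<sigma> \<circ> perm_of_word (j # w)) (rev (j # w)) =
        H n (\<sigma> \<circ> tr j \<circ> perm_of_word w) (rev w) @ H n (\<sigma> \<circ> tr j) [j]"
    by (simp add: H_append pe) (simp add: perm_of_word_Cons o_assoc)
  also have "\<dots> = inv_word (H n (\<sigma> \<circ> tr j) w) @ inv_word (tau n \<sigma> j)"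
    by (simp only: Cons.IH[OF inj1] tau_swap[OF ne] H.simps append_Nil2)
  finally show ?case by (simp only: rev.simps H.simps inv_word_append)
qed




definition act1 :: "('a \<times> bool) \<Rightarrow> ('a \<times> bool) list \<Rightarrow> ('a \<times> bool) list" where
  "act1 xb r = (case r of [] \<Rightarrow> [xb] | y # r' \<Rightarrow> (if fst y = fst xb \<and> snd y \<noteq> snd xb then r' else xb # r))"

definition RR :: "('a \<times> bool) list set" where "RR = {r. freely_reduced r}"

lemma fr_Cons: "freely_reduced (xb # r) \<longleftrightarrow> freely_reduced r \<and>
   (case r of [] \<Rightarrow> True | y # _ \<Rightarrow> \<not> (fst xb = fst y \<and> snd xb \<noteq> snd y))"
proof (cases r)
  case Nil then show ?thesis by (cases xb) auto
next
  case (Cons y r') then show ?thesis by (cases xb; cases y) auto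
qed

lemma fr_tl: "freely_reduced (xb # r) \<Longrightarrow> freely_reduced r"
  by (simp add: fr_Cons)

lemma act1_R: "r \<in> RR \<Longrightarrow> act1 xb r \<in> RR"
proof (cases r)
  case Nil then show ?thesis by (simp add: act1_def RR_def fr_Cons)
next
  case (Cons y r')
  assume "r \<in> RR"
  then have fr: "freely_reduced (y # r')" using Cons by (simp add: RR_def)
  show ?thesis
  proof (cases "fst y = fst xb \<and> snd y \<noteq> snd xb")
    case True then show ?thesis using fr_tl[OF fr] by (simp add: act1_def Cons RR_def)
  next
    case False
    then have "freely_reduced (xb # y # r')" using fr by (auto simp: fr_Cons)
    then show ?thesis using False by (auto simp: act1_def Cons RR_def)
  qed
qed

lemma act1_inv: "r \<in> RR \<Longrightarrow> act1 (fst xb, \<not> snd xb) (act1 xb r) = r"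
proof (cases r)
  case Nil then show ?thesis by (simp add: act1_def)
next
  case (Cons y r')
  assume "r \<in> RR"
  then have fr: "freely_reduced (y # r')" using Cons by (simp add: RR_def)
  show ?thesis
  proof (cases "fst y = fst xb \<and> snd y \<noteq> snd xb")
    case True
    have "act1 xb r = r'" using True by (simp add: act1_def Cons)
    moreover have "act1 (fst xb, \<not> snd xb) r' = y # r'"
    proof (cases r')
      case Nil then show ?thesis using True by (cases y) (auto simp: act1_def)
    next
      case (Cons z r'')
      have "\<not> (fst y = fst z \<and> snd y \<noteq> snd z)" using fr Cons by (subst (asm) fr_Cons) simp
      then show ?thesis using True Cons by (cases y) (auto simp: act1_def)
    qed
    ultimately show ?thesis using Cons by simp
  next
    case False
    then show ?thesis by (auto simp: act1_def Cons)
  qed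
qed

definition Lg :: "('a \<times> bool) \<Rightarrow> ('a \<times> bool) list \<Rightarrow> ('a \<times> bool) list" where
  "Lg xb = restrict (act1 xb) RR"

abbreviation FG :: "(('a \<times> bool) list \<Rightarrow> ('a \<times> bool) list) monoid" where
  "FG \<equiv> BijGroup RR"

lemma group_FG: "group FG" by (rule group_BijGroup)
lemmas FGm = group.is_monoid[OF group_FG]
lemmas FG_m_closed = monoid.m_closed[OF FGm]
lemmas FG_m_assoc = monoid.m_assoc[OF FGm]
lemmas FG_r_one = monoid.r_one[OF FGm]
lemmas FG_l_one = monoid.l_one[OF FGm]
lemmas FG_one_closed = monoid.one_closed[OF FGm]
lemmas FG_inv_one = monoid.inv_one[OF FGm]

lemma Lg_carrier: "Lg xb \<in> carrier FG"
proof -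
  have 1: "\<forall>a\<in>RR. act1 (fst xb, \<not> snd xb) (act1 xb a) = a" using act1_inv by blast
  have 2: "\<forall>a\<in>RR. act1 xb (act1 (fst xb, \<not> snd xb) a) = a" using act1_inv[of _ "(fst xb, \<not> snd xb)"] by simp
  have 3: "act1 xb ` RR \<subseteq> RR" "act1 (fst xb, \<not> snd xb) ` RR \<subseteq> RR" using act1_R by blast+
  have "bij_betw (act1 xb) RR RR"
    by (rule bij_betw_byWitness[OF 1 2 3])
  then show ?thesis by (simp add: BijGroup_def Bij_def Lg_def)
qed

lemma FG_mult_apply: "g \<in> carrier FG \<Longrightarrow> h \<in> carrier FG \<Longrightarrow> r \<in> RR \<Longrightarrow> (g \<otimes>\<^bsub>FG\<^esub> h) r = g (h r)"
  by (simp add: BijGroup_def compose_def)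

lemma FG_one_apply: "r \<in> RR \<Longrightarrow> \<one>\<^bsub>FG\<^esub> r = r"
  by (simp add: BijGroup_def)

lemma Lg_inv_mult: "Lg (fst xb, \<not> snd xb) \<otimes>\<^bsub>FG\<^esub> Lg xb = \<one>\<^bsub>FG\<^esub>"
proof (rule extensionalityI[where A = RR])
  show "Lg (fst xb, \<not> snd xb) \<otimes>\<^bsub>FG\<^esub> Lg xb \<in> extensional RR"
    using FG_m_closed[OF Lg_carrier Lg_carrier] unfolding BijGroup_def Bij_def by (simp only: partial_object.simps) blast
  show "\<one>\<^bsub>FG\<^esub> \<in> extensional RR" by (simp add: BijGroup_def)
  fix r :: "('a \<times> bool) list" assume r: "r \<in> RR"
  then show "(Lg (fst xb, \<not> snd xb) \<otimes>\<^bsub>FG\<^esub> Lg xb) r = \<one>\<^bsub>FG\<^esub> r"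
    by (simp add: FG_mult_apply Lg_carrier FG_one_apply) (simp add: Lg_def act1_R act1_inv)
qed

lemma Lg_inv: "inv\<^bsub>FG\<^esub> (Lg xb) = Lg (fst xb, \<not> snd xb)"
  by (rule group.inv_equality[OF group_FG Lg_inv_mult Lg_carrier Lg_carrier])

definition evalG :: "('a \<times> bool) list \<Rightarrow> ('a \<times> bool) list \<Rightarrow> ('a \<times> bool) list" where
  "evalG w = foldr (\<lambda>a g. Lg a \<otimes>\<^bsub>FG\<^esub> g) w \<one>\<^bsub>FG\<^esub>"

lemma evalG_Nil[simp]: "evalG [] = \<one>\<^bsub>FG\<^esub>" by (simp add: evalG_def)
lemma evalG_Cons: "evalG (a # w) = Lg a \<otimes>\<^bsub>FG\<^esub> evalG w" by (simp add: evalG_def)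

lemma evalG_carrier[simp]: "evalG w \<in> carrier FG"
  by (induction w) (auto simp: evalG_Cons FG_m_closed Lg_carrier FG_one_closed)

lemma evalG_append: "evalG (u @ v) = evalG u \<otimes>\<^bsub>FG\<^esub> evalG v"
  by (induction u) (auto simp: evalG_Cons FG_m_assoc Lg_carrier FG_l_one)

lemma evalG_inv: "evalG (inv_word w) = inv\<^bsub>FG\<^esub> (evalG w)"
proof (induction w)
  case Nil then show ?case by (simp add: FG_inv_one)
next
  case (Cons a w)
  obtain x b where a: "a = (x,b)" by (cases a)
  have "evalG (inv_word (a # w)) = evalG (inv_word w) \<otimes>\<^bsub>FG\<^esub> Lg (x, \<not> b)"
    by (simp add: a inv_word_Cons evalG_append evalG_Cons FG_r_one Lg_carrier)
  also have "\<dots> = inv\<^bsub>FG\<^esub> (evalG w) \<otimes>\<^bsub>FG\<^esub> inv\<^bsub>FG\<^esub> (Lg a)"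
    using Cons by (simp add: Lg_inv a)
  also have "\<dots> = inv\<^bsub>FG\<^esub> (Lg a \<otimes>\<^bsub>FG\<^esub> evalG w)"
    by (simp add: group.inv_mult_group[OF group_FG] Lg_carrier)
  finally show ?case by (simp add: evalG_Cons)
qed

lemma evalG_red: "freely_reduced w \<Longrightarrow> evalG w [] = w"
proof (induction w)
  case Nil have "([] :: ('a \<times> bool) list) \<in> RR" by (simp add: RR_def)
  then show ?case by (simp add: FG_one_apply)
next
  case (Cons a w)
  then have IH: "evalG w [] = w" by (simp add: fr_tl)
  have "([] :: ('a \<times> bool) list) \<in> RR" by (simp add: RR_def)
  then have "evalG (a # w) [] = Lg a w" by (simp add: evalG_Cons FG_mult_apply Lg_carrier IH)
  also have "\<dots> = a # w" using Cons.prems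
    by (cases w) (auto simp: Lg_def RR_def act1_def fr_Cons dest: fr_tl)
  finally show ?case .
qed

definition HG :: "nat \<Rightarrow> (nat \<Rightarrow> nat) \<Rightarrow> nat list \<Rightarrow> fword \<Rightarrow> fword" where
  "HG n \<sigma> w = evalG (H n \<sigma> w)"

definition T :: "nat \<Rightarrow> (nat \<Rightarrow> nat) \<Rightarrow> nat \<Rightarrow> fword \<Rightarrow> fword" where
  "T n \<sigma> j = evalG (tau n \<sigma> j)"

lemma HG_carrier[simp]: "HG n \<sigma> w \<in> carrier FG" by (simp add: HG_def)

lemma T_carrier[simp]: "T n \<sigma> j \<in> carrier FG" by (simp add: T_def)

lemma HG3: "HG n \<sigma> [a,b,c] = T n \<sigma> a \<otimes>\<^bsub>FG\<^esub> (T n (\<sigma> \<circ> tr a) b \<otimes>\<^bsub>FG\<^esub> T n (\<sigma> \<circ> tr a \<circ> tr b) c)"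
  by (simp add: HG_def T_def evalG_append FG_r_one)

lemma inj_ne: "inj \<sigma> \<Longrightarrow> \<sigma> j \<noteq> \<sigma> (Suc j)"
  by (metis injD n_not_Suc_n)

lemma inj_tr: "inj \<sigma> \<Longrightarrow> inj (\<sigma> \<circ> transpose a b)"
  by (simp add: inj_compose)

lemma T_swap: "inj \<sigma> \<Longrightarrow> T n (\<sigma> \<circ> tr j) j = inv\<^bsub>FG\<^esub> (T n \<sigma> j)"
  by (simp add: T_def tau_swap inj_ne evalG_inv)

lemma GL1:
  assumes c: "a \<in> carrier FG" "b \<in> carrier FG" "c \<in> carrier FG" "d \<in> carrier FG" "e \<in> carrier FG" "f \<in> carrier FG"
    and h: "a \<otimes>\<^bsub>FG\<^esub> (b \<otimes>\<^bsub>FG\<^esub> c) = d \<otimes>\<^bsub>FG\<^esub> (e \<otimes>\<^bsub>FG\<^esub> f)"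
  shows "inv\<^bsub>FG\<^esub> a \<otimes>\<^bsub>FG\<^esub> (d \<otimes>\<^bsub>FG\<^esub> e) = b \<otimes>\<^bsub>FG\<^esub> (c \<otimes>\<^bsub>FG\<^esub> inv\<^bsub>FG\<^esub> f)"
proof -
  interpret G: group FG by (rule group_FG)
  have "b \<otimes>\<^bsub>FG\<^esub> c = inv\<^bsub>FG\<^esub> a \<otimes>\<^bsub>FG\<^esub> (d \<otimes>\<^bsub>FG\<^esub> (e \<otimes>\<^bsub>FG\<^esub> f))"
    using h c by (metis G.inv_solve_left G.m_closed)
  then have "b \<otimes>\<^bsub>FG\<^esub> (c \<otimes>\<^bsub>FG\<^esub> inv\<^bsub>FG\<^esub> f) = inv\<^bsub>FG\<^esub> a \<otimes>\<^bsub>FG\<^esub> (d \<otimes>\<^bsub>FG\<^esub> (e \<otimes>\<^bsub>FG\<^esub> f)) \<otimes>\<^bsub>FG\<^esub> inv\<^bsub>FG\<^esub> f"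
    using c by (simp add: G.m_assoc[symmetric])
  also have "\<dots> = inv\<^bsub>FG\<^esub> a \<otimes>\<^bsub>FG\<^esub> (d \<otimes>\<^bsub>FG\<^esub> e)" using c by (simp add: G.m_assoc)
  finally show ?thesis by simp
qed

lemma braid_comp: "\<sigma> \<circ> tr i \<circ> tr (Suc i) \<circ> tr i = \<sigma> \<circ> tr (Suc i) \<circ> tr i \<circ> tr (Suc i)"
  using braid_perm_pt[of i] by (simp add: fun_eq_iff)

definition HX :: "nat \<Rightarrow> (nat \<Rightarrow> nat) \<Rightarrow> nat \<Rightarrow> bool" where
  "HX n \<sigma> i \<longleftrightarrow> HG n \<sigma> [i, Suc i, i] = HG n \<sigma> [Suc i, i, Suc i]"

lemma HX_step1: "inj \<sigma> \<Longrightarrow> HX n \<sigma> i \<Longrightarrow> HX n (\<sigma> \<circ> tr i) i"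
proof -
  assume inj: "inj \<sigma>" and hx: "HX n \<sigma> i"
  let ?a = "T n \<sigma> i" and ?b = "T n (\<sigma> \<circ> tr i) (Suc i)" and ?c = "T n (\<sigma> \<circ> tr i \<circ> tr (Suc i)) i"
  let ?d = "T n \<sigma> (Suc i)" and ?e = "T n (\<sigma> \<circ> tr (Suc i)) i" and ?f = "T n (\<sigma> \<circ> tr (Suc i) \<circ> tr i) (Suc i)"
  have h: "?a \<otimes>\<^bsub>FG\<^esub> (?b \<otimes>\<^bsub>FG\<^esub> ?c) = ?d \<otimes>\<^bsub>FG\<^esub> (?e \<otimes>\<^bsub>FG\<^esub> ?f)"
    using hx by (simp add: HX_def HG3)
  have 1: "T n (\<sigma> \<circ> tr i) i = inv\<^bsub>FG\<^esub> ?a" by (rule T_swap[OF inj])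
  have 2: "T n (\<sigma> \<circ> tr i \<circ> tr (Suc i) \<circ> tr i) (Suc i) = inv\<^bsub>FG\<^esub> ?f"
    unfolding braid_comp by (rule T_swap) (intro inj_tr inj)
  show ?thesis unfolding HX_def HG3 comp_tr_tr 1 2
    by (rule GL1[OF _ _ _ _ _ _ h]) simp_all
qed

lemma HX_step2: "inj \<sigma> \<Longrightarrow> HX n \<sigma> i \<Longrightarrow> HX n (\<sigma> \<circ> tr (Suc i)) i"
proof -
  assume inj: "inj \<sigma>" and hx: "HX n \<sigma> i"
  let ?a = "T n \<sigma> i" and ?b = "T n (\<sigma> \<circ> tr i) (Suc i)" and ?c = "T n (\<sigma> \<circ> tr i \<circ> tr (Suc i)) i"
  let ?d = "T n \<sigma> (Suc i)" and ?e = "T n (\<sigma> \<circ> tr (Suc i)) i" and ?f = "T n (\<sigma> \<circ> tr (Suc i) \<circ> tr i) (Suc i)"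
  have h: "?d \<otimes>\<^bsub>FG\<^esub> (?e \<otimes>\<^bsub>FG\<^esub> ?f) = ?a \<otimes>\<^bsub>FG\<^esub> (?b \<otimes>\<^bsub>FG\<^esub> ?c)"
    using hx by (simp add: HX_def HG3)
  have 1: "T n (\<sigma> \<circ> tr (Suc i)) (Suc i) = inv\<^bsub>FG\<^esub> ?d" by (rule T_swap[OF inj])
  have 2: "T n (\<sigma> \<circ> tr (Suc i) \<circ> tr i \<circ> tr (Suc i)) i = inv\<^bsub>FG\<^esub> ?c"
    unfolding braid_comp[symmetric] by (rule T_swap) (intro inj_tr inj)
  have "inv\<^bsub>FG\<^esub> ?d \<otimes>\<^bsub>FG\<^esub> (?a \<otimes>\<^bsub>FG\<^esub> ?b) = ?e \<otimes>\<^bsub>FG\<^esub> (?f \<otimes>\<^bsub>FG\<^esub> inv\<^bsub>FG\<^esub> ?c)"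
    by (rule GL1[OF _ _ _ _ _ _ h]) simp_all
  then show ?thesis unfolding HX_def HG3 comp_tr_tr 1 2 by simp
qed

lemma HX_iff1: "inj \<sigma> \<Longrightarrow> HX n (\<sigma> \<circ> tr i) i \<longleftrightarrow> HX n \<sigma> i"
  using HX_step1[of \<sigma> n i] HX_step1[of "\<sigma> \<circ> tr i" n i] by (auto simp: inj_tr)

lemma HX_iff2: "inj \<sigma> \<Longrightarrow> HX n (\<sigma> \<circ> tr (Suc i)) i \<longleftrightarrow> HX n \<sigma> i"
  using HX_step2[of \<sigma> n i] HX_step2[of "\<sigma> \<circ> tr (Suc i)" n i] by (auto simp: inj_tr)

lemma perm_5: "\<rho> \<circ> tr (Suc i) \<circ> tr i \<circ> tr (Suc i) \<circ> perm_of_word [i, Suc i] = \<rho> \<circ> tr i"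
  by (auto simp: fun_eq_iff perm_of_word_Cons transpose_def)

lemma HX_elim: "inj \<rho> \<Longrightarrow> \<rho> i < \<rho> (Suc i) \<Longrightarrow> elim n \<rho> i \<Longrightarrow> HX n \<rho> i"
proof -
  assume inj: "inj \<rho>" and fw: "\<rho> i < \<rho> (Suc i)" and e: "elim n \<rho> i"
  let ?r = "\<rho> \<circ> tr (Suc i) \<circ> tr i \<circ> tr (Suc i)"
  have ne1: "\<not> elim n (\<rho> \<circ> tr (Suc i)) i" using fw by (auto simp: elim_def)
  have ne2: "\<not> elim n ?r i" using e by (auto simp: elim_def transpose_def)
  have "tau n \<rho> i = F n \<rho> i" using fw by (simp add: tau_def dirw_def)
  also have "\<dots> = H n \<rho> [Suc i, i, Suc i] @ H n ?r [i, Suc i]"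
    using e by (simp add: F_elim tau_noelim[OF ne1, symmetric] tau_noelim[OF ne2, symmetric])
  finally have t: "T n \<rho> i = HG n \<rho> [Suc i, i, Suc i] \<otimes>\<^bsub>FG\<^esub> HG n ?r [i, Suc i]"
    unfolding T_def HG_def evalG_append[symmetric] by simp
  have injr: "inj ?r" using inj by (intro inj_tr)
  have "H n (?r \<circ> perm_of_word [i, Suc i]) (rev [i, Suc i]) = inv_word (H n ?r [i, Suc i])"
    by (rule H_rev[OF injr])
  then have "H n (\<rho> \<circ> tr i) [Suc i, i] = inv_word (H n ?r [i, Suc i])"
    by (simp only: perm_5 rev.simps append.simps)
  then have r: "HG n (\<rho> \<circ> tr i) [Suc i, i] = inv\<^bsub>FG\<^esub> (HG n ?r [i, Suc i])"
    unfolding HG_def evalG_inv[symmetric] by (rule arg_cong[where f=evalG])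
  have "HG n \<rho> [i, Suc i, i] = T n \<rho> i \<otimes>\<^bsub>FG\<^esub> HG n (\<rho> \<circ> tr i) [Suc i, i]"
    by (simp add: HG_def T_def evalG_append)
  also have "\<dots> = HG n \<rho> [Suc i, i, Suc i]" unfolding t r
    by (simp add: FG_m_assoc group.r_inv[OF group_FG] group.inv_closed[OF group_FG] FG_r_one HG_carrier)
  finally show ?thesis by (simp add: HX_def)
qed

lemma HX_all: "inj \<sigma> \<Longrightarrow> Suc (Suc i) \<le> n \<Longrightarrow> HX n \<sigma> i"
proof -
  assume inj: "inj \<sigma>" and n: "Suc (Suc i) \<le> n"
  have d: "\<sigma> i \<noteq> \<sigma> (Suc i)" "\<sigma> i \<noteq> \<sigma> (Suc (Suc i))" "\<sigma> (Suc i) \<noteq> \<sigma> (Suc (Suc i))"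
    using inj by (simp_all add: inj_eq)
  have E: "\<And>\<rho>. inj \<rho> \<Longrightarrow> \<rho> i < \<rho> (Suc i) \<Longrightarrow> \<rho> (Suc (Suc i)) < \<rho> i \<Longrightarrow> HX n \<rho> i"
    using n by (intro HX_elim) (auto simp: elim_def)
  have i1: "\<And>\<rho>. inj \<rho> \<Longrightarrow> inj (\<rho> \<circ> tr i)" "\<And>\<rho>. inj \<rho> \<Longrightarrow> inj (\<rho> \<circ> tr (Suc i))" by (auto intro: inj_tr)
  consider "\<sigma> (Suc (Suc i)) < \<sigma> i \<and> \<sigma> i < \<sigma> (Suc i)"
    | "\<sigma> (Suc (Suc i)) < \<sigma> (Suc i) \<and> \<sigma> (Suc i) < \<sigma> i"
    | "\<sigma> (Suc i) < \<sigma> i \<and> \<sigma> i < \<sigma> (Suc (Suc i))"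
    | "\<sigma> i < \<sigma> (Suc i) \<and> \<sigma> (Suc i) < \<sigma> (Suc (Suc i))"
    | "\<sigma> (Suc i) < \<sigma> (Suc (Suc i)) \<and> \<sigma> (Suc (Suc i)) < \<sigma> i"
    | "\<sigma> i < \<sigma> (Suc (Suc i)) \<and> \<sigma> (Suc (Suc i)) < \<sigma> (Suc i)"
    using d by linarith
  then show ?thesis
  proof cases
    case 1 then show ?thesis using E[OF inj] by simp
  next
    case 2
    have "HX n (\<sigma> \<circ> tr i) i" using 2 by (intro E i1 inj) simp_all
    then show ?thesis using HX_iff1[OF inj] by simp
  next
    case 3
    have "HX n (\<sigma> \<circ> tr (Suc i)) i" using 3 by (intro E i1 inj) simp_all
    then show ?thesis using HX_iff2[OF inj] by simp
  next
    case 4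
    have "HX n (\<sigma> \<circ> tr i \<circ> tr (Suc i)) i" using 4 by (intro E i1 inj) simp_all
    then show ?thesis using HX_iff1[OF inj] HX_iff2[OF i1(1)[OF inj]] by simp
  next
    case 5
    have "HX n (\<sigma> \<circ> tr (Suc i) \<circ> tr i) i" using 5 by (intro E i1 inj) simp_all
    then show ?thesis using HX_iff2[OF inj] HX_iff1[OF i1(2)[OF inj]] by simp
  next
    case 6
    have "HX n (\<sigma> \<circ> tr (Suc i) \<circ> tr i \<circ> tr (Suc i)) i" using 6 by (intro E i1 inj) simp_all
    then show ?thesis using HX_iff2[OF inj] HX_iff1[OF i1(2)[OF inj]] HX_iff2[OF i1(1)[OF i1(2)[OF inj]]] by simp
  qed
qed

lemma HG_append: "HG n \<sigma> (u @ v) = HG n \<sigma> u \<otimes>\<^bsub>FG\<^esub> HG n (\<sigma> \<circ> perm_of_word u) v"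
  by (simp add: HG_def H_append evalG_append)


lemma HG_sq: "inj \<sigma> \<Longrightarrow> HG n \<sigma> [j, j] = \<one>\<^bsub>FG\<^esub>"
  using T_swap[of \<sigma> n j]
  by (simp add: HG_def T_def evalG_append FG_r_one group.r_inv[OF group_FG])

lemma HG_Lrel: "(u, v) \<in> Lrel n \<Longrightarrow> inj \<sigma> \<Longrightarrow> HG n \<sigma> u = HG n \<sigma> v"
proof (induction arbitrary: \<sigma> rule: Lrel.induct)
  case (Lsq u v j)
  have inj: "inj (\<sigma> \<circ> perm_of_word u)" using Lsq by (simp add: inj_comp_perm)
  have p: "perm_of_word [j, j] = id" by (simp add: perm_of_word_Cons)
  have "HG n \<sigma> (u @ [j, j] @ v) = HG n \<sigma> u \<otimes>\<^bsub>FG\<^esub> (HG n (\<sigma> \<circ> perm_of_word u) [j,j] \<otimes>\<^bsub>FG\<^esub> HG n (\<sigma> \<circ> perm_of_word u \<circ> perm_of_word [j,j]) v)"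
    by (simp only: HG_append)
  also have "\<dots> = HG n \<sigma> u \<otimes>\<^bsub>FG\<^esub> HG n (\<sigma> \<circ> perm_of_word u) v" using HG_sq[OF inj, of n j]
    by (simp only: p comp_id FG_l_one HG_carrier)
  also have "\<dots> = HG n \<sigma> (u @ v)" by (simp only: HG_append)
  finally show ?case .
next
  case (Lbraid u v i)
  have inj: "inj (\<sigma> \<circ> perm_of_word u)" using Lbraid by (simp add: inj_comp_perm)
  have hx: "HX n (\<sigma> \<circ> perm_of_word u) i" by (rule HX_all[OF inj]) (use Lbraid in simp)
  have p: "perm_of_word [i, Suc i, i] = perm_of_word [Suc i, i, Suc i]"
    by (simp add: perm_of_word_Cons fun_eq_iff braid_perm_pt)
  let ?s = "\<sigma> \<circ> perm_of_word u"
  have "HG n \<sigma> (u @ [i, Suc i, i] @ v) = HG n \<sigma> u \<otimes>\<^bsub>FG\<^esub> (HG n ?s [i, Suc i, i] \<otimes>\<^bsub>FG\<^esub> HG n (?s \<circ> perm_of_word [i, Suc i, i]) v)"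
    by (simp only: HG_append)
  also have "\<dots> = HG n \<sigma> u \<otimes>\<^bsub>FG\<^esub> (HG n ?s [Suc i, i, Suc i] \<otimes>\<^bsub>FG\<^esub> HG n (?s \<circ> perm_of_word [Suc i, i, Suc i]) v)"
    by (simp only: hx[unfolded HX_def] p)
  also have "\<dots> = HG n \<sigma> (u @ [Suc i, i, Suc i] @ v)" by (simp only: HG_append)
  finally show ?case .
qed auto

definition Phi :: "nat \<Rightarrow> nat list set \<Rightarrow> fword \<Rightarrow> fword" where
  "Phi n A = HG n id (SOME w. w \<in> A)"

lemma Phi_cl: "a \<in> Lwords n \<Longrightarrow> Phi n (cl n a) = HG n id a"
proof -
  assume a: "a \<in> Lwords n"
  then have "(SOME w. w \<in> cl n a) \<in> cl n a" using cl_self by (metis someI)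
  then have "(a, SOME w. w \<in> cl n a) \<in> Lrel n" by simp
  then show ?thesis unfolding Phi_def by (metis HG_Lrel inj_on_id)
qed

lemma PL_mult: "monoid.mult (PL n) = monoid.mult (L n)" by (simp add: PL_def)
lemma PL_one: "\<one>\<^bsub>PL n\<^esub> = cl n []" by (simp add: PL_def L_one)
lemma PL_carrier: "carrier (PL n) = PL_set n" by (simp add: PL_def)

lemma Phi_hom: "Phi n \<in> hom (PL n) FG"
proof (rule homI)
  fix A assume "A \<in> carrier (PL n)" then show "Phi n A \<in> carrier FG"
    by (auto simp: PL_carrier elim!: PL_setE simp: Phi_cl)
next
  fix A B assume "A \<in> carrier (PL n)" "B \<in> carrier (PL n)"
  then obtain a b where ab: "A = cl n a" "a \<in> Lwords n" "perm_of_word a = id"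
    "B = cl n b" "b \<in> Lwords n" by (auto simp: PL_carrier elim!: PL_setE)
  then show "Phi n (A \<otimes>\<^bsub>PL n\<^esub> B) = Phi n A \<otimes>\<^bsub>FG\<^esub> Phi n B"
    by (simp add: PL_mult L_mult Phi_cl HG_append)
qed

lemma Phi_group_hom: "group_hom (PL n) FG (Phi n)"
  by (simp add: group_hom_def group_hom_axioms_def group_PL group_FG Phi_hom)




definition wsum :: "nat \<Rightarrow> (nat \<Rightarrow> nat) \<Rightarrow> nat" where
  "wsum n \<sigma> = (\<Sum>a\<in>{1..n}. a * \<sigma> a)"

lemma Dset_finite: "finite (Dset n \<sigma>)"
  by (rule finite_subset[of _ "{..<n}"]) (auto simp: Dset_def)

lemma Max_Dset: "Dset n \<sigma> \<noteq> {} \<Longrightarrow> Max (Dset n \<sigma>) \<in> Dset n \<sigma>"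
  using Dset_finite by (rule Max_in)

lemma wsum_swap:
  assumes d: "1 \<le> d" "d < n"
  shows "wsum n (\<sigma> \<circ> tr d) + d * \<sigma> d + Suc d * \<sigma> (Suc d) = wsum n \<sigma> + d * \<sigma> (Suc d) + Suc d * \<sigma> d"
proof -
  let ?A = "{1..n} - {d} - {Suc d}"
  have fin: "finite ?A" by simp
  have dA: "d \<in> {1..n}" "Suc d \<in> {1..n} - {d}" using d by auto
  have s1: "sum f {1..n} = f d + f (Suc d) + sum f ?A" for f
  proof -
    have a: "sum f {1..n} = f d + sum f ({1..n} - {d})" by (rule sum.remove) (use dA in auto)
    have b: "sum f ({1..n} - {d}) = f (Suc d) + sum f ?A" by (rule sum.remove) (use dA in auto)
    show ?thesis by (simp only: a b add.assoc)
  qed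
  have eq: "(\<Sum>a\<in>?A. a * (\<sigma> \<circ> tr d) a) = (\<Sum>a\<in>?A. a * \<sigma> a)"
    by (rule sum.cong) (auto simp: transpose_def)
  show ?thesis unfolding wsum_def s1[of "\<lambda>a. a * (\<sigma> \<circ> tr d) a"] s1[of "\<lambda>a. a * \<sigma> a"] eq
    by simp
qed

lemma wsum_bound: "\<sigma> permutes {1..n} \<Longrightarrow> wsum n \<sigma> \<le> n * n * n"
proof -
  assume p: "\<sigma> permutes {1..n}"
  have "\<And>a. a \<in> {1..n} \<Longrightarrow> a * \<sigma> a \<le> n * n"
  proof -
    fix a assume a: "a \<in> {1..n}"
    then have "\<sigma> a \<in> {1..n}" using permutes_in_image[OF p] by blast
    then show "a * \<sigma> a \<le> n * n" using a by (intro mult_mono) auto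
  qed
  then have "wsum n \<sigma> \<le> of_nat (card {1..n}) * (n * n)" unfolding wsum_def by (rule sum_bounded_above)
  then show ?thesis by simp
qed

lemma wsum_incr: "\<sigma> permutes {1..n} \<Longrightarrow> d \<in> Dset n \<sigma> \<Longrightarrow> wsum n \<sigma> < wsum n (\<sigma> \<circ> tr d)"
proof -
  assume d: "d \<in> Dset n \<sigma>"
  then have d': "1 \<le> d" "d < n" "\<sigma> (Suc d) < \<sigma> d" by (auto simp: Dset_def)
  have "d * \<sigma> (Suc d) + Suc d * \<sigma> d > d * \<sigma> d + Suc d * \<sigma> (Suc d)"
    using d'(3) by (simp add: algebra_simps)
  then show ?thesis using wsum_swap[OF d'(1,2), of \<sigma>] by linarith
qed

lemma permutes_tr: "\<sigma> permutes {1..n} \<Longrightarrow> 1 \<le> d \<Longrightarrow> d < n \<Longrightarrow> \<sigma> \<circ> tr d permutes {1..n}"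
  by (rule permutes_compose[OF permutes_swap_id]) auto

function pth :: "nat \<Rightarrow> (nat \<Rightarrow> nat) \<Rightarrow> nat list" where
  "pth n \<sigma> = (if \<sigma> permutes {1..n} \<and> Dset n \<sigma> \<noteq> {}
      then pth n (\<sigma> \<circ> tr (Max (Dset n \<sigma>))) @ [Max (Dset n \<sigma>)] else [])"
  by auto
termination
proof (relation "measure (\<lambda>(n, \<sigma>). n * n * n - wsum n \<sigma>)")
  show "wf (measure (\<lambda>(n, \<sigma>). n * n * n - wsum n \<sigma>))" by simp
  fix n \<sigma> assume a: "\<sigma> permutes {1..n} \<and> Dset n \<sigma> \<noteq> {}"
  let ?d = "Max (Dset n \<sigma>)"
  have d: "?d \<in> Dset n \<sigma>" using a Max_Dset by blast
  then have "1 \<le> ?d" "?d < n" by (auto simp: Dset_def)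
  then have "wsum n (\<sigma> \<circ> tr ?d) \<le> n * n * n" using a by (intro wsum_bound permutes_tr) auto
  moreover have "wsum n \<sigma> < wsum n (\<sigma> \<circ> tr ?d)" using a d by (intro wsum_incr) auto
  ultimately show "((n, \<sigma> \<circ> tr ?d), n, \<sigma>) \<in> measure (\<lambda>(n, \<sigma>). n * n * n - wsum n \<sigma>)"
    by simp
qed

declare pth.simps[simp del]

lemma noDesc_id:
  assumes p: "\<sigma> permutes {1..n}" and D: "Dset n \<sigma> = {}"
  shows "\<sigma> = id"
proof
  fix a
  have inc: "\<And>d. 1 \<le> d \<Longrightarrow> d < n \<Longrightarrow> \<sigma> d < \<sigma> (Suc d)"
  proof -
    fix d assume "1 \<le> d" "d < n"
    then have "\<not> \<sigma> (Suc d) < \<sigma> d" using D by (auto simp: Dset_def)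
    moreover have "\<sigma> d \<noteq> \<sigma> (Suc d)" using permutes_inj[OF p] by (simp add: inj_eq)
    ultimately show "\<sigma> d < \<sigma> (Suc d)" by simp
  qed
  have up: "\<And>b k. 1 \<le> b \<Longrightarrow> b + k \<le> n \<Longrightarrow> \<sigma> b + k \<le> \<sigma> (b + k)"
  proof -
    fix b k show "1 \<le> b \<Longrightarrow> b + k \<le> n \<Longrightarrow> \<sigma> b + k \<le> \<sigma> (b + k)"
    proof (induction k)
      case 0 then show ?case by simp
    next
      case (Suc k)
      then have "\<sigma> (b + k) < \<sigma> (Suc (b + k))" by (intro inc) auto
      then show ?case using Suc by simp
    qed
  qed
  have rng: "\<And>x. x \<in> {1..n} \<Longrightarrow> \<sigma> x \<in> {1..n}" using permutes_in_image[OF p] by blast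
  show "\<sigma> a = id a"
  proof (cases "a \<in> {1..n}")
    case False then show ?thesis using permutes_not_in[OF p] by simp
  next
    case True
    have "\<sigma> a + (n - a) \<le> \<sigma> (a + (n - a))" using True by (intro up) auto
    moreover have "\<sigma> n \<le> n" using rng[of n] True by auto
    ultimately have 1: "\<sigma> a \<le> a" using True by auto
    have "\<sigma> 1 + (a - 1) \<le> \<sigma> (1 + (a - 1))" using True by (intro up) auto
    moreover have "\<sigma> 1 \<ge> 1" using rng[of 1] True by auto
    ultimately have 2: "\<sigma> a \<ge> a" using True by auto
    from 1 2 show ?thesis by simp
  qed
qed

lemma pth_perm: "\<sigma> permutes {1..n} \<Longrightarrow> perm_of_word (pth n \<sigma>) = \<sigma>"
proof (induction n \<sigma> rule: pth.induct)
  case (1 n \<sigma>)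
  show ?case
  proof (cases "Dset n \<sigma> = {}")
    case True then show ?thesis using noDesc_id[OF 1(2) True] by (subst pth.simps) simp
  next
    case False
    let ?d = "Max (Dset n \<sigma>)"
    have d: "1 \<le> ?d" "?d < n" using Max_Dset[OF False] by (auto simp: Dset_def)
    have "perm_of_word (pth n (\<sigma> \<circ> tr ?d)) = \<sigma> \<circ> tr ?d"
      using 1 False permutes_tr[OF 1(2) d] by blast
    then show ?thesis using 1(2) False
      by (subst pth.simps) (simp add: perm_of_word_append perm_of_word_Cons)
  qed
qed

lemma pth_words: "pth n \<sigma> \<in> Lwords n"
proof (induction n \<sigma> rule: pth.induct)
  case (1 n \<sigma>)
  show ?case
  proof (cases "\<sigma> permutes {1..n} \<and> Dset n \<sigma> \<noteq> {}")
    case True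
    have d: "1 \<le> Max (Dset n \<sigma>)" "Max (Dset n \<sigma>) < n" using Max_Dset True by (auto simp: Dset_def)
    have "pth n (\<sigma> \<circ> tr (Max (Dset n \<sigma>))) \<in> Lwords n" using 1 True by blast
    then show ?thesis using True d by (subst pth.simps) simp
  next
    case False then show ?thesis by (subst pth.simps) auto
  qed
qed

lemma pth_id: "pth n id = []"
  by (subst pth.simps) (simp add: Dset_def)

lemma tree_not_elim: "tree n \<rho> j \<Longrightarrow> \<not> elim n \<rho> j"
proof
  assume t: "tree n \<rho> j" and e: "elim n \<rho> j"
  have "Suc j \<in> Dset n (\<rho> \<circ> tr j)" using e by (auto simp: Dset_def elim_def)
  then have "Suc j \<le> Max (Dset n (\<rho> \<circ> tr j))" using Dset_finite by (rule Max_ge[rotated])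
  then show False using t by (simp add: tree_def)
qed

lemma pth_tree: "\<rho> permutes {1..n} \<Longrightarrow> 1 \<le> j \<Longrightarrow> j < n \<Longrightarrow> tree n \<rho> j \<Longrightarrow>
   pth n (\<rho> \<circ> tr j) = pth n \<rho> @ [j]"
proof -
  assume p: "\<rho> permutes {1..n}" "1 \<le> j" "j < n" and t: "tree n \<rho> j"
  have "\<rho> \<circ> tr j permutes {1..n}" using p by (rule permutes_tr)
  then show ?thesis using t unfolding tree_def by (subst pth.simps) simp
qed

lemma H_pth: "\<sigma> permutes {1..n} \<Longrightarrow> H n id (pth n \<sigma>) = []"
proof (induction n \<sigma> rule: pth.induct)
  case (1 n \<sigma>)
  show ?case
  proof (cases "Dset n \<sigma> = {}")
    case True then show ?thesis by (subst pth.simps) simp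
  next
    case False
    let ?d = "Max (Dset n \<sigma>)"
    let ?r = "\<sigma> \<circ> tr ?d"
    have dd: "?d \<in> Dset n \<sigma>" using Max_Dset[OF False] .
    then have d: "1 \<le> ?d" "?d < n" "\<sigma> (Suc ?d) < \<sigma> ?d" by (auto simp: Dset_def)
    have pr: "?r permutes {1..n}" using permutes_tr[OF 1(2) d(1,2)] .
    have IH: "H n id (pth n ?r) = []" using 1 False pr by blast
    have fw: "?r ?d < ?r (Suc ?d)" using d by simp
    have tr: "tree n ?r ?d" using False by (simp add: tree_def)
    have ne: "\<not> elim n ?r ?d" using tree_not_elim[OF tr] .
    have "tau n ?r ?d = []" using fw ne tr by (simp add: tau_def dirw_def F_base base0_def)
    moreover have "perm_of_word (pth n ?r) = ?r" using pth_perm[OF pr] .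
    ultimately show ?thesis using 1(2) False IH
      by (subst pth.simps) (simp add: H_append)
  qed
qed




lemma cl_rel: assumes "(u, v) \<in> Lrel n" "x \<in> Lwords n" "y \<in> Lwords n"
  shows "cl n (x @ u @ y) = cl n (x @ v @ y)"
  by (rule equiv_class_eq[OF Lrel_equiv Lrel_cong[OF assms]])

lemma rc1: "w \<in> Lwords n \<Longrightarrow> (rev w @ w, []) \<in> Lrel n" using Lrel_rev_cancel by blast
lemma rc2: "w \<in> Lwords n \<Longrightarrow> (w @ rev w, []) \<in> Lrel n" using Lrel_rev_cancel by blast

definition gg :: "nat \<Rightarrow> (nat \<Rightarrow> nat) \<Rightarrow> nat \<Rightarrow> nat list set" where
  "gg n \<sigma> j = cl n (pth n \<sigma> @ [j] @ rev (pth n (\<sigma> \<circ> tr j)))"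

definition EE :: "nat \<Rightarrow> ((nat \<Rightarrow> nat) \<times> nat) set" where
  "EE n = {(\<rho>, j). \<rho> permutes {1..n} \<and> 1 \<le> j \<and> j < n \<and> \<rho> j < \<rho> (Suc j) \<and> \<not> elim n \<rho> j \<and> \<not> tree n \<rho> j}"

definition SS :: "nat \<Rightarrow> nat list set set" where
  "SS n = (\<lambda>(\<rho>, j). gg n \<rho> j) ` EE n"

lemma gg_words: "1 \<le> j \<Longrightarrow> j < n \<Longrightarrow> pth n \<sigma> @ [j] @ rev (pth n (\<sigma> \<circ> tr j)) \<in> Lwords n"
  by (simp add: pth_words)

lemma gg_PL: "\<sigma> permutes {1..n} \<Longrightarrow> 1 \<le> j \<Longrightarrow> j < n \<Longrightarrow> gg n \<sigma> j \<in> carrier (PL n)"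
proof -
  assume p: "\<sigma> permutes {1..n}" "1 \<le> j" "j < n"
  have p2: "\<sigma> \<circ> tr j permutes {1..n}" using p by (rule permutes_tr)
  have "perm_of_word (pth n (\<sigma> \<circ> tr j)) \<circ> perm_of_word (rev (pth n (\<sigma> \<circ> tr j))) = id"
    using perm_rev by blast
  then have "\<sigma> \<circ> tr j \<circ> perm_of_word (rev (pth n (\<sigma> \<circ> tr j))) = id" using pth_perm[OF p2] by simp
  then have "perm_of_word (pth n \<sigma> @ [j] @ rev (pth n (\<sigma> \<circ> tr j))) = id"
    using pth_perm[OF p(1)] by (simp add: perm_of_word_append perm_of_word_Cons o_assoc)
  then show ?thesis unfolding gg_def PL_carrier using PL_set_cl gg_words[OF p(2,3)] by blast
qed

lemma SS_sub: "SS n \<subseteq> carrier (PL n)"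
  unfolding SS_def EE_def using gg_PL by auto

abbreviation gen :: "nat \<Rightarrow> nat list set set" where "gen n \<equiv> generate (PL n) (SS n)"

lemma gen_mult: "a \<in> gen n \<Longrightarrow> b \<in> gen n \<Longrightarrow> a \<otimes>\<^bsub>PL n\<^esub> b \<in> gen n"
  by (rule generate.eng)

lemma gen_inv: "a \<in> gen n \<Longrightarrow> inv\<^bsub>PL n\<^esub> a \<in> gen n"
  by (rule group.generate_m_inv_closed[OF group_PL SS_sub])

lemma gg_swap: "\<sigma> permutes {1..n} \<Longrightarrow> 1 \<le> j \<Longrightarrow> j < n \<Longrightarrow> gg n (\<sigma> \<circ> tr j) j = inv\<^bsub>PL n\<^esub> (gg n \<sigma> j)"
proof -
  assume p: "\<sigma> permutes {1..n}" "1 \<le> j" "j < n"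
  have p2: "\<sigma> \<circ> tr j permutes {1..n}" using p by (rule permutes_tr)
  let ?a = "pth n \<sigma>" and ?b = "pth n (\<sigma> \<circ> tr j)"
  have w: "?a \<in> Lwords n" "?b \<in> Lwords n" by (simp_all add: pth_words)
  have "gg n (\<sigma> \<circ> tr j) j \<otimes>\<^bsub>PL n\<^esub> gg n \<sigma> j = cl n (?b @ [j] @ (rev ?a @ ?a) @ [j] @ rev ?b)"
    unfolding gg_def PL_mult using p w by (simp add: L_mult)
  also have "\<dots> = cl n ((?b @ [j]) @ [] @ ([j] @ rev ?b))"
    using cl_rel[OF rc1[OF w(1)], where x = "?b @ [j]" and y = "[j] @ rev ?b"] w p by simp
  also have "\<dots> = cl n (?b @ [] @ rev ?b)"
    using cl_rel[OF Lrel_sq[OF p(2,3)], where x = "?b" and y = "rev ?b"] w p by simp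
  also have "\<dots> = cl n ([] @ [] @ [])" using cl_rel[OF rc2[OF w(2)], where x = "[]" and y = "[]"] by simp
  finally have "gg n (\<sigma> \<circ> tr j) j \<otimes>\<^bsub>PL n\<^esub> gg n \<sigma> j = \<one>\<^bsub>PL n\<^esub>" by (simp add: PL_one)
  then have "inv\<^bsub>PL n\<^esub> (gg n \<sigma> j) = gg n (\<sigma> \<circ> tr j) j"
    by (rule group.inv_equality[OF group_PL]) (auto intro: gg_PL p p2)
  then show ?thesis by simp
qed

fun prodg :: "nat \<Rightarrow> (nat \<Rightarrow> nat) \<Rightarrow> nat list \<Rightarrow> nat list set" where
  "prodg n \<sigma> [] = \<one>\<^bsub>PL n\<^esub>"
| "prodg n \<sigma> (j # w) = gg n \<sigma> j \<otimes>\<^bsub>PL n\<^esub> prodg n (\<sigma> \<circ> tr j) w"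

lemma tele: "\<sigma> permutes {1..n} \<Longrightarrow> w \<in> Lwords n \<Longrightarrow>
  cl n (pth n \<sigma> @ w @ rev (pth n (\<sigma> \<circ> perm_of_word w))) = prodg n \<sigma> w"
proof (induction w arbitrary: \<sigma>)
  case Nil
  have "cl n (pth n \<sigma> @ [] @ rev (pth n \<sigma>)) = cl n ([] @ [] @ [])"
    using cl_rel[OF rc2[OF pth_words], where x = "[]" and y = "[]"] by simp
  then show ?case by (simp add: PL_one L_one)
next
  case (Cons j w)
  then have j: "1 \<le> j" "j < n" and w: "w \<in> Lwords n" by auto
  have p2: "\<sigma> \<circ> tr j permutes {1..n}" using Cons.prems j by (intro permutes_tr)
  let ?a = "pth n \<sigma>" and ?b = "pth n (\<sigma> \<circ> tr j)" and ?c = "pth n (\<sigma> \<circ> tr j \<circ> perm_of_word w)"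
  have ws: "?a \<in> Lwords n" "?b \<in> Lwords n" "?c \<in> Lwords n" by (simp_all add: pth_words)
  have "prodg n \<sigma> (j # w) = gg n \<sigma> j \<otimes>\<^bsub>PL n\<^esub> cl n (?b @ w @ rev ?c)"
    by (simp only: prodg.simps Cons.IH[OF p2 w])
  also have "\<dots> = cl n ((?a @ [j]) @ (rev ?b @ ?b) @ (w @ rev ?c))"
    unfolding gg_def PL_mult using ws j w by (simp add: L_mult)
  also have "\<dots> = cl n ((?a @ [j]) @ [] @ (w @ rev ?c))"
    using cl_rel[OF rc1[OF ws(2)], where x = "?a @ [j]" and y = "w @ rev ?c"] ws j w by simp
  finally have X: "prodg n \<sigma> (j # w) = cl n ((?a @ [j]) @ [] @ (w @ rev ?c))" .
  have pc: "\<sigma> \<circ> perm_of_word (j # w) = \<sigma> \<circ> tr j \<circ> perm_of_word w" by (simp only: perm_of_word_Cons o_assoc)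
  have Y: "(?a @ [j]) @ [] @ (w @ rev ?c) = pth n \<sigma> @ (j # w) @ rev (pth n (\<sigma> \<circ> perm_of_word (j # w)))"
    by (simp only: pc append_assoc append.simps)
  show ?case by (simp only: X Y)
qed

lemma prodg_gen: "(\<And>\<sigma> j. \<sigma> permutes {1..n} \<Longrightarrow> 1 \<le> j \<Longrightarrow> j < n \<Longrightarrow> gg n \<sigma> j \<in> gen n) \<Longrightarrow>
   \<sigma> permutes {1..n} \<Longrightarrow> w \<in> Lwords n \<Longrightarrow> prodg n \<sigma> w \<in> gen n"
proof (induction w arbitrary: \<sigma>)
  case Nil then show ?case by (simp add: generate.one)
next
  case (Cons j w)
  then have j: "1 \<le> j" "j < n" and w: "w \<in> Lwords n" by auto
  have "gg n \<sigma> j \<in> gen n" using Cons.prems(1)[OF Cons.prems(2) j] .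
  moreover have "prodg n (\<sigma> \<circ> tr j) w \<in> gen n"
    using Cons.IH[OF Cons.prems(1) permutes_tr[OF Cons.prems(2) j] w] .
  ultimately show ?case by (simp add: gen_mult)
qed

lemma perm5: "perm_of_word [Suc j, j, Suc j, j, Suc j] = tr j"
  by (auto simp: fun_eq_iff perm_of_word_Cons transpose_def)

lemma L5: "1 \<le> j \<Longrightarrow> Suc (Suc j) \<le> n \<Longrightarrow> ([Suc j, j, Suc j, j, Suc j], [j]) \<in> Lrel n"
proof -
  assume j: "1 \<le> j" "Suc (Suc j) \<le> n"
  have 1: "([] @ [Suc j, j, Suc j] @ [j, Suc j], [] @ [j, Suc j, j] @ [j, Suc j]) \<in> Lrel n"
    using j by (intro Lrel.Lbraid[THEN Lrel.Lsym]) auto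
  have 2: "([j, Suc j] @ [j, j] @ [Suc j], [j, Suc j] @ [Suc j]) \<in> Lrel n"
    using j by (intro Lrel.Lsq) auto
  have 3: "([j] @ [Suc j, Suc j] @ [], [j] @ []) \<in> Lrel n"
    using j by (intro Lrel.Lsq) auto
  from 1 2 3 show ?thesis by (auto intro: Lrel.Ltrans)
qed

lemma gg_fwd_noelim: "\<rho> permutes {1..n} \<Longrightarrow> 1 \<le> j \<Longrightarrow> j < n \<Longrightarrow> \<rho> j < \<rho> (Suc j) \<Longrightarrow> \<not> elim n \<rho> j \<Longrightarrow>
  gg n \<rho> j \<in> gen n"
proof -
  assume p: "\<rho> permutes {1..n}" "1 \<le> j" "j < n" and fw: "\<rho> j < \<rho> (Suc j)" and ne: "\<not> elim n \<rho> j"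
  show ?thesis
  proof (cases "tree n \<rho> j")
    case True
    let ?a = "pth n \<rho>"
    have w: "?a \<in> Lwords n" by (simp add: pth_words)
    have "gg n \<rho> j = cl n (?a @ [j, j] @ rev ?a)" unfolding gg_def pth_tree[OF p True] by simp
    also have "\<dots> = cl n (?a @ [] @ rev ?a)"
      using cl_rel[OF Lrel_sq[OF p(2,3)], where x = "?a" and y = "rev ?a"] w by simp
    also have "\<dots> = cl n ([] @ [] @ [])" using cl_rel[OF rc2[OF w], where x = "[]" and y = "[]"] by simp
    finally show ?thesis using generate.one[of "PL n" "SS n"] by (simp add: PL_one)
  next
    case False
    then have "(\<rho>, j) \<in> EE n" using p fw ne by (simp add: EE_def)
    then show ?thesis unfolding SS_def by (auto intro: generate.incl)
  qed
qed

lemma gg_noelim: "\<sigma> permutes {1..n} \<Longrightarrow> 1 \<le> j \<Longrightarrow> j < n \<Longrightarrow> \<not> elim n \<sigma> j \<Longrightarrow> gg n \<sigma> j \<in> gen n"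
proof -
  assume p: "\<sigma> permutes {1..n}" "1 \<le> j" "j < n" and ne: "\<not> elim n \<sigma> j"
  show ?thesis
  proof (cases "\<sigma> j < \<sigma> (Suc j)")
    case True then show ?thesis using gg_fwd_noelim p ne by blast
  next
    case False
    have "\<sigma> j \<noteq> \<sigma> (Suc j)" using permutes_inj[OF p(1)] by (simp add: inj_eq)
    then have fw: "(\<sigma> \<circ> tr j) j < (\<sigma> \<circ> tr j) (Suc j)" using False by simp
    have p2: "\<sigma> \<circ> tr j permutes {1..n}" using p by (rule permutes_tr)
    have ne2: "\<not> elim n (\<sigma> \<circ> tr j) j" unfolding elim_swap by (rule ne)
    have "gg n (\<sigma> \<circ> tr j) j \<in> gen n"
      using gg_fwd_noelim[OF p2 p(2,3) fw ne2] .
    then have "inv\<^bsub>PL n\<^esub> gg n (\<sigma> \<circ> tr j) j \<in> gen n" by (rule gen_inv)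
    also have "inv\<^bsub>PL n\<^esub> gg n (\<sigma> \<circ> tr j) j = gg n (\<sigma> \<circ> tr j \<circ> tr j) j"
      using gg_swap[OF p2 p(2,3)] by simp
    finally show ?thesis by simp
  qed
qed

lemma gg_all: "\<sigma> permutes {1..n} \<Longrightarrow> 1 \<le> j \<Longrightarrow> j < n \<Longrightarrow> gg n \<sigma> j \<in> gen n"
proof (induction "n - j" arbitrary: j \<sigma> rule: less_induct)
  case less
  note p = less.prems
  show ?case
  proof (cases "elim n \<sigma> j")
    case False then show ?thesis using gg_noelim p by blast
  next
    case True
    then have jn: "Suc (Suc j) \<le> n" by (simp add: elim_def)
    have IH: "\<And>\<tau>. \<tau> permutes {1..n} \<Longrightarrow> gg n \<tau> (Suc j) \<in> gen n"
      using less.hyps[of "Suc j"] jn p by auto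
    have NE: "\<And>\<tau>. \<tau> permutes {1..n} \<Longrightarrow> \<not> elim n \<tau> j \<Longrightarrow> gg n \<tau> j \<in> gen n"
      using gg_noelim p by blast
    have fwd: "\<And>\<rho>. \<rho> permutes {1..n} \<Longrightarrow> \<rho> j < \<rho> (Suc j) \<Longrightarrow> elim n \<rho> j \<Longrightarrow> gg n \<rho> j \<in> gen n"
    proof -
      fix \<rho> assume r: "\<rho> permutes {1..n}" and fw: "\<rho> j < \<rho> (Suc j)" and e: "elim n \<rho> j"
      let ?w = "[Suc j, j, Suc j, j, Suc j]"
      have w: "?w \<in> Lwords n" using jn p by simp
      have "gg n \<rho> j = cl n (pth n \<rho> @ [j] @ rev (pth n (\<rho> \<circ> perm_of_word ?w)))"
        unfolding gg_def perm5 ..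
      also have "\<dots> = cl n (pth n \<rho> @ ?w @ rev (pth n (\<rho> \<circ> perm_of_word ?w)))"
        using cl_rel[OF L5[OF p(2) jn], where x = "pth n \<rho>" and y = "rev (pth n (\<rho> \<circ> perm_of_word ?w))"]
      by (simp add: pth_words)
      also have "\<dots> = prodg n \<rho> ?w" using r w by (rule tele)
      finally have eq: "gg n \<rho> j = prodg n \<rho> ?w" .
      have pr: "\<And>\<tau> k. \<tau> permutes {1..n} \<Longrightarrow> 1 \<le> k \<Longrightarrow> k < n \<Longrightarrow> \<tau> \<circ> tr k permutes {1..n}"
        by (rule permutes_tr)
      have r1: "\<rho> \<circ> tr (Suc j) permutes {1..n}" by (rule pr[OF r]) (use jn p in auto)
      have r2: "\<rho> \<circ> tr (Suc j) \<circ> tr j permutes {1..n}" by (rule pr[OF r1]) (use jn p in auto)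
      have r3: "\<rho> \<circ> tr (Suc j) \<circ> tr j \<circ> tr (Suc j) permutes {1..n}" by (rule pr[OF r2]) (use jn p in auto)
      have r4: "\<rho> \<circ> tr (Suc j) \<circ> tr j \<circ> tr (Suc j) \<circ> tr j permutes {1..n}" by (rule pr[OF r3]) (use jn p in auto)
      have ne1: "\<not> elim n (\<rho> \<circ> tr (Suc j)) j" using fw by (auto simp: elim_def)
      have ne3: "\<not> elim n (\<rho> \<circ> tr (Suc j) \<circ> tr j \<circ> tr (Suc j)) j" using e by (auto simp: elim_def transpose_def)
      have "prodg n \<rho> ?w \<in> gen n"
        using IH[OF r] IH[OF r2] IH[OF r4] NE[OF r1 ne1] NE[OF r3 ne3]
        by (simp add: gen_mult generate.one)
      then show "gg n \<rho> j \<in> gen n" using eq by simp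
    qed
    show ?thesis
    proof (cases "\<sigma> j < \<sigma> (Suc j)")
      case True then show ?thesis using fwd p(1) \<open>elim n \<sigma> j\<close> by blast
    next
      case False
      have "\<sigma> j \<noteq> \<sigma> (Suc j)" using permutes_inj[OF p(1)] by (simp add: inj_eq)
      then have fw: "(\<sigma> \<circ> tr j) j < (\<sigma> \<circ> tr j) (Suc j)" using False by simp
      have p2: "\<sigma> \<circ> tr j permutes {1..n}" using p by (intro permutes_tr)
      have e2: "elim n (\<sigma> \<circ> tr j) j" unfolding elim_swap by (rule True)
      have "gg n (\<sigma> \<circ> tr j) j \<in> gen n"
        using fwd[OF p2 fw e2] .
      then have "inv\<^bsub>PL n\<^esub> gg n (\<sigma> \<circ> tr j) j \<in> gen n" by (rule gen_inv)
      also have "inv\<^bsub>PL n\<^esub> gg n (\<sigma> \<circ> tr j) j = gg n (\<sigma> \<circ> tr j \<circ> tr j) j"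
        using gg_swap[OF p2 p(2,3)] by simp
      finally show ?thesis by simp
    qed
  qed
qed

lemma generate_SS: "generate (PL n) (SS n) = carrier (PL n)"
proof
  show "gen n \<subseteq> carrier (PL n)" by (rule group.generate_incl[OF group_PL SS_sub])
next
  show "carrier (PL n) \<subseteq> gen n"
  proof
    fix A assume "A \<in> carrier (PL n)"
    then obtain a where a: "A = cl n a" "a \<in> Lwords n" "perm_of_word a = id"
      by (auto simp: PL_carrier elim!: PL_setE)
    have "cl n (pth n id @ a @ rev (pth n (id \<circ> perm_of_word a))) = prodg n id a"
      using a(2) by (intro tele) (simp add: permutes_id)
    then have "A = prodg n id a" using a by (simp add: pth_id)
    moreover have "prodg n id a \<in> gen n"
      using gg_all a(2) by (intro prodg_gen) (auto simp: permutes_id)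
    ultimately show "A \<in> gen n" by simp
  qed
qed




lemma act1_Nil: "act1 xb [] = [xb]" by (simp add: act1_def)

lemma Lg_apply: "r \<in> RR \<Longrightarrow> Lg xb r = act1 xb r" by (simp add: Lg_def)

lemma tau_letter: "(\<rho>, j) \<in> EE n \<Longrightarrow> tau n \<rho> j = [((\<rho>, j), False)]"
  by (simp add: EE_def tau_def dirw_def F_base base0_def)

lemma Phi_gg: "(\<rho>, j) \<in> EE n \<Longrightarrow> Phi n (gg n \<rho> j) = Lg ((\<rho>, j), False)"
proof -
  assume e: "(\<rho>, j) \<in> EE n"
  then have p: "\<rho> permutes {1..n}" "1 \<le> j" "j < n" by (auto simp: EE_def)
  have p2: "\<rho> \<circ> tr j permutes {1..n}" using p by (rule permutes_tr)
  let ?a = "pth n \<rho>" and ?b = "pth n (\<rho> \<circ> tr j)"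
  have h1: "H n id ?a = []" by (rule H_pth[OF p(1)])
  have h2: "H n (id \<circ> perm_of_word ?b) (rev ?b) = inv_word (H n id ?b)" by (rule H_rev) simp
  have q1: "id \<circ> perm_of_word ?a = \<rho>" by (simp only: pth_perm[OF p(1)] id_comp)
  have q2: "id \<circ> perm_of_word ?b = \<rho> \<circ> tr j" by (simp only: pth_perm[OF p2] id_comp)
  have q3: "\<rho> \<circ> perm_of_word [j] = \<rho> \<circ> tr j" by (simp only: perm_of_word_Cons perm_of_word_Nil comp_id)
  have h2': "H n (\<rho> \<circ> tr j) (rev ?b) = []" using h2 unfolding q2 by (simp only: H_pth[OF p2] inv_word_Nil)
  have "H n id (?a @ [j] @ rev ?b) = H n id ?a @ H n (id \<circ> perm_of_word ?a) ([j] @ rev ?b)"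
    by (rule H_append)
  also have "\<dots> = H n \<rho> [j] @ H n (\<rho> \<circ> perm_of_word [j]) (rev ?b)"
    by (simp only: h1 q1 H_append append_Nil)
  also have "\<dots> = [((\<rho>, j), False)]"
    by (simp only: q3 h2' H.simps tau_letter[OF e] append_Nil2)
  finally have "H n id (?a @ [j] @ rev ?b) = [((\<rho>, j), False)]" .
  then show ?thesis unfolding gg_def Phi_cl[OF gg_words[OF p(2,3)]] HG_def
    by (simp add: evalG_Cons FG_r_one Lg_carrier)
qed

definition lt :: "nat \<Rightarrow> nat list set \<Rightarrow> (nat \<Rightarrow> nat) \<times> nat" where
  "lt n s = (SOME e. e \<in> EE n \<and> s = gg n (fst e) (snd e))"

lemma lt_SS: "s \<in> SS n \<Longrightarrow> lt n s \<in> EE n \<and> s = gg n (fst (lt n s)) (snd (lt n s))"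
  unfolding lt_def SS_def by (rule someI_ex) auto

lemma Phi_SS: "s \<in> SS n \<Longrightarrow> Phi n s = Lg (lt n s, False)"
  using lt_SS[of s n] Phi_gg[of "fst (lt n s)" "snd (lt n s)" n] by simp

lemma map_fr: "inj_on g (fst ` set ws) \<Longrightarrow> freely_reduced ws \<Longrightarrow> freely_reduced (map (\<lambda>(x, b). (g x, b)) ws)"
proof (induction ws)
  case Nil then show ?case by simp
next
  case (Cons a ws)
  obtain x b where a: "a = (x, b)" by (cases a)
  have IH: "freely_reduced (map (\<lambda>(x, b). (g x, b)) ws)"
    using Cons by (auto intro: inj_on_subset dest: fr_tl)
  show ?case
  proof (cases ws)
    case Nil then show ?thesis by (simp add: a)
  next
    case (Cons c ws')
    obtain y d where c: "c = (y, d)" by (cases c)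
    have "\<not> (x = y \<and> b \<noteq> d)" using Cons.prems(2) \<open>ws = c # ws'\<close> a c by simp
    moreover have "g x = g y \<Longrightarrow> x = y" using Cons.prems(1) \<open>ws = c # ws'\<close> a c by (auto dest: inj_onD)
    ultimately show ?thesis using IH \<open>ws = c # ws'\<close> a c by auto
  qed
qed

lemma eval_word_carrier: "fst ` set ws \<subseteq> carrier (PL n) \<Longrightarrow> eval_word (PL n) ws \<in> carrier (PL n)"
proof (induction ws)
  case Nil then show ?case by (simp add: eval_word_def group.is_monoid[OF group_PL] monoid.one_closed)
next
  case (Cons a ws)
  interpret G: group "PL n" by (rule group_PL)
  show ?case using Cons by (auto simp: eval_word_def)
qed

lemma Phi_eval: "fst ` set ws \<subseteq> SS n \<Longrightarrow> Phi n (eval_word (PL n) ws) = evalG (map (\<lambda>(s, b). (lt n s, b)) ws)"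
proof (induction ws)
  case Nil
  interpret h: group_hom "PL n" FG "Phi n" by (rule Phi_group_hom)
  show ?case by (simp add: eval_word_def)
next
  case (Cons a ws)
  interpret h: group_hom "PL n" FG "Phi n" by (rule Phi_group_hom)
  obtain s b where a: "a = (s, b)" by (cases a)
  have s: "s \<in> SS n" "s \<in> carrier (PL n)" using Cons.prems a SS_sub by auto
  have ws: "fst ` set ws \<subseteq> SS n" using Cons.prems by auto
  have ec: "eval_word (PL n) ws \<in> carrier (PL n)" using ws SS_sub by (intro eval_word_carrier) auto
  have ev: "eval_word (PL n) (a # ws) = (if b then inv\<^bsub>PL n\<^esub> s else s) \<otimes>\<^bsub>PL n\<^esub> eval_word (PL n) ws"
    by (simp add: eval_word_def a)
  have ic: "(if b then inv\<^bsub>PL n\<^esub> s else s) \<in> carrier (PL n)" using s by (simp add: group.inv_closed[OF group_PL])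
  have "Phi n (if b then inv\<^bsub>PL n\<^esub> s else s) = Lg (lt n s, b)"
    using s by (cases b) (simp_all add: Phi_SS Lg_inv)
  then show ?case unfolding ev h.hom_mult[OF ic ec] Cons.IH[OF ws] by (simp add: a evalG_Cons)
qed

lemma free_basis_SS: "free_basis (PL n) (SS n)"
  unfolding free_basis_def
proof (intro conjI allI impI)
  show "SS n \<subseteq> carrier (PL n)" by (rule SS_sub)
  show "generate (PL n) (SS n) = carrier (PL n)" by (rule generate_SS)
  fix ws :: "(nat list set \<times> bool) list"
  assume w: "ws \<noteq> [] \<and> fst ` set ws \<subseteq> SS n \<and> freely_reduced ws"
  interpret h: group_hom "PL n" FG "Phi n" by (rule Phi_group_hom)
  have inj: "inj_on (lt n) (fst ` set ws)"
    using w lt_SS by (intro inj_onI) (metis subsetD)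
  have "Phi n (eval_word (PL n) ws) [] = map (\<lambda>(s, b). (lt n s, b)) ws"
    using w by (simp add: Phi_eval evalG_red map_fr[OF inj])
  moreover have "map (\<lambda>(s, b). (lt n s, b)) ws \<noteq> []" using w by simp
  moreover have "Phi n \<one>\<^bsub>PL n\<^esub> [] = []"
  proof -
    have "([] :: fword) \<in> RR" by (simp add: RR_def)
    then show ?thesis by (simp add: FG_one_apply)
  qed
  ultimately show "eval_word (PL n) ws \<noteq> \<one>\<^bsub>PL n\<^esub>" by auto
qed

lemma finite_SS: "finite (SS n)"
proof -
  have "EE n \<subseteq> {\<rho>. \<rho> permutes {1..n}} \<times> {..<n}" by (auto simp: EE_def)
  moreover have "finite ({\<rho>. \<rho> permutes {1..n}} \<times> {..<n})"
    by (intro finite_cartesian_product finite_permutations) auto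
  ultimately show ?thesis unfolding SS_def by (auto intro: finite_subset)
qed

lemma EE_empty: "n \<le> 3 \<Longrightarrow> EE n = {}"
proof (rule ccontr)
  assume n: "n \<le> 3" and "EE n \<noteq> {}"
  then obtain \<rho> j where e: "(\<rho>, j) \<in> EE n" by auto
  then have j: "1 \<le> j" "j < n" and fw: "\<rho> j < \<rho> (Suc j)" and ne: "\<not> elim n \<rho> j" and nt: "\<not> tree n \<rho> j"
    by (auto simp: EE_def)
  have jD: "j \<in> Dset n (\<rho> \<circ> tr j)" using j fw by (simp add: Dset_def)
  show False
  proof (cases "Suc (Suc j) \<le> n")
    case False
    have "Max (Dset n (\<rho> \<circ> tr j)) = j"
      using jD False by (intro Max_eqI Dset_finite) (auto simp: Dset_def)
    then show False using nt jD by (auto simp: tree_def)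
  next
    case True
    then have j1: "j = 1" "n = 3" using n j by auto
    have "Max (Dset n (\<rho> \<circ> tr j)) \<in> Dset n (\<rho> \<circ> tr j)" using jD Max_Dset by blast
    moreover have "Max (Dset n (\<rho> \<circ> tr j)) \<noteq> 1" using nt jD j1 by (auto simp: tree_def)
    moreover have "\<And>d. d \<in> Dset n (\<rho> \<circ> tr j) \<Longrightarrow> d = 1 \<or> d = 2" using j1 by (auto simp: Dset_def)
    ultimately have "Max (Dset n (\<rho> \<circ> tr j)) = 2" by blast
    then have "2 \<in> Dset n (\<rho> \<circ> tr j)" using \<open>Max (Dset n (\<rho> \<circ> tr j)) \<in> Dset n (\<rho> \<circ> tr j)\<close> by simp
    then have "(\<rho> \<circ> tr 1) 3 < (\<rho> \<circ> tr 1) 2" using j1 by (simp add: Dset_def)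
    moreover have "(\<rho> \<circ> tr 1) 3 = \<rho> 3" "(\<rho> \<circ> tr 1) 2 = \<rho> 1" by (simp_all add: transpose_def)
    ultimately have "\<rho> 3 < \<rho> 1" by simp
    then show False using ne fw j1 by (simp add: elim_def numeral_eq_Suc)
  qed
qed

lemma carrier_trivial: "n \<le> 3 \<Longrightarrow> carrier (PL n) = {\<one>\<^bsub>PL n\<^esub>}"
proof -
  assume n: "n \<le> 3"
  have e: "SS n = {}" using EE_empty[OF n] by (simp add: SS_def)
  have g: "x \<in> generate (PL n) {} \<Longrightarrow> x = \<one>\<^bsub>PL n\<^esub>" for x
    by (induction rule: generate.induct) (auto simp: group.is_monoid[OF group_PL] monoid.l_one monoid.one_closed)
  have c: "carrier (PL n) \<subseteq> {\<one>\<^bsub>PL n\<^esub>}"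
    unfolding generate_SS[of n, symmetric] e by (rule subsetI, subst singleton_iff, erule g)
  have o: "\<one>\<^bsub>PL n\<^esub> \<in> carrier (PL n)" by (simp add: group.is_monoid[OF group_PL] monoid.one_closed)
  show ?thesis
  proof (rule equalityI[OF c])
    show "{\<one>\<^bsub>PL n\<^esub>} \<subseteq> carrier (PL n)" using o by (simp only: insert_subset empty_subsetI simp_thms)
  qed
qed

lemma nonab: "4 \<le> n \<Longrightarrow> nonabelian (PL n)"
proof -
  assume n: "4 \<le> n"
  define r1 where "r1 = tr 3"
  define r2 where "r2 = tr 1 \<circ> tr 2 \<circ> tr 3"
  have pt: "\<And>k. 1 \<le> k \<Longrightarrow> Suc k \<le> n \<Longrightarrow> tr k permutes {1..n}" by (intro permutes_swap_id) auto
  have p1: "r1 permutes {1..n}" unfolding r1_def using n by (intro pt) auto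
  have p2: "r2 permutes {1..n}" unfolding r2_def using n by (intro permutes_compose pt) auto
  have D1: "3 \<in> Dset n (r1 \<circ> tr 1)" using n by (simp add: Dset_def r1_def transpose_def numeral_eq_Suc)
  have D2: "3 \<in> Dset n (r2 \<circ> tr 1)" using n by (simp add: Dset_def r2_def transpose_def numeral_eq_Suc)
  have nt1: "\<not> tree n r1 1" using Max_ge[OF Dset_finite D1] by (auto simp: tree_def)
  have nt2: "\<not> tree n r2 1" using Max_ge[OF Dset_finite D2] by (auto simp: tree_def)
  have e1: "(r1, 1) \<in> EE n" using p1 nt1 n by (simp add: EE_def r1_def elim_def transpose_def numeral_eq_Suc)
  have e2: "(r2, 1) \<in> EE n" using p2 nt2 n by (simp add: EE_def r2_def elim_def transpose_def numeral_eq_Suc)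
  have d: "r1 \<noteq> r2"
  proof
    assume "r1 = r2" then have "r1 1 = r2 1" by simp
    then show False by (simp add: r1_def r2_def transpose_def numeral_eq_Suc)
  qed
  let ?x = "gg n r1 1" and ?y = "gg n r2 1"
  have c: "?x \<in> carrier (PL n)" "?y \<in> carrier (PL n)" using p1 p2 n by (auto intro: gg_PL)
  interpret h: group_hom "PL n" FG "Phi n" by (rule Phi_group_hom)
  have R: "([] :: fword) \<in> RR" by (simp add: RR_def)
  have ph1: "Phi n ?x = Lg ((r1, 1), False)" by (rule Phi_gg[OF e1])
  have ph2: "Phi n ?y = Lg ((r2, 1), False)" by (rule Phi_gg[OF e2])
  have R2: "[((r2, 1), False)] \<in> RR" "[((r1, 1), False)] \<in> RR" by (simp_all add: RR_def)
  have "Phi n (?x \<otimes>\<^bsub>PL n\<^esub> ?y) [] = Lg ((r1, 1), False) (Lg ((r2, 1), False) [])"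
    by (simp only: h.hom_mult[OF c] ph1 ph2 FG_mult_apply[OF Lg_carrier Lg_carrier R])
  also have "\<dots> = [((r1, 1), False), ((r2, 1), False)]"
    using d by (simp only: Lg_apply[OF R] act1_Nil Lg_apply[OF R2(1)]) (simp add: act1_def)
  finally have 1: "Phi n (?x \<otimes>\<^bsub>PL n\<^esub> ?y) [] = [((r1, 1), False), ((r2, 1), False)]" .
  have "Phi n (?y \<otimes>\<^bsub>PL n\<^esub> ?x) [] = Lg ((r2, 1), False) (Lg ((r1, 1), False) [])"
    by (simp only: h.hom_mult[OF c(2,1)] ph1 ph2 FG_mult_apply[OF Lg_carrier Lg_carrier R])
  also have "\<dots> = [((r2, 1), False), ((r1, 1), False)]"
    using d by (simp only: Lg_apply[OF R] act1_Nil Lg_apply[OF R2(2)]) (simp add: act1_def)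
  finally have 2: "Phi n (?y \<otimes>\<^bsub>PL n\<^esub> ?x) [] = [((r2, 1), False), ((r1, 1), False)]" .
  from 1 2 have "?x \<otimes>\<^bsub>PL n\<^esub> ?y \<noteq> ?y \<otimes>\<^bsub>PL n\<^esub> ?x" using d by auto
  then show ?thesis unfolding nonabelian_def using c by blast
qed

theorem proposition5p3:
  fixes n :: nat
  assumes "n \<ge> 2"
  shows "((free_group_finite_rank (PL n) \<and> nonabelian (PL n)) \<longleftrightarrow> n \<ge> 4) \<and>
         (n \<le> 3 \<longrightarrow> carrier (PL n) = {\<one>\<^bsub>PL n\<^esub>})"
proof (intro conjI impI)
  show "n \<le> 3 \<Longrightarrow> carrier (PL n) = {\<one>\<^bsub>PL n\<^esub>}" by (rule carrier_trivial)
  have fg: "free_group_finite_rank (PL n)"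
    unfolding free_group_finite_rank_def using group_PL finite_SS free_basis_SS by blast
  show "(free_group_finite_rank (PL n) \<and> nonabelian (PL n)) \<longleftrightarrow> n \<ge> 4"
  proof
    assume "free_group_finite_rank (PL n) \<and> nonabelian (PL n)"
    then have "nonabelian (PL n)" by simp
    then show "n \<ge> 4"
    proof (rule contrapos_pp)
      assume "\<not> n \<ge> 4"
      then have "carrier (PL n) = {\<one>\<^bsub>PL n\<^esub>}" by (intro carrier_trivial) simp
      then show "\<not> nonabelian (PL n)" by (simp add: nonabelian_def)
    qed
  next
    assume "n \<ge> 4" then show "free_group_finite_rank (PL n) \<and> nonabelian (PL n)"
      using fg nonab by blast
  qed
qed


end
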